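(* Let $\phi\colon\mathbb{N}\to(0,\infty)$ be a non-decreasing function and let $$M(\phi)=\{x\in\mathbb{I}\colon M_n(x)\ge\phi(n)\text{ for infinitely many }n\}.$$ Then $\mathcal{L}(M(\phi))=1$ if $\sum_{n=1}^\infty\frac{1}{\phi(n)}=\infty$, and $\mathcal{L}(M(\phi))=0$ if $\sum_{n=1}^\infty\frac{1}{\phi(n)}<\infty$.
   Context: $\mathcal{L}$ is Lebesgue measure on $(0,1)$, $\mathbb{I}=(0,1)\setminus\mathbb{Q}$. Signed Engel expansion: define $T\colon[0,1)\to[0,1)$ by: for $k\in\mathbb{N}$, $Tx=\lceil 1/x\rceil x-1$ if $x\in(\frac{1}{2k},\frac{1}{2k-1})$; $Tx=1-\lfloor 1/x\rfloor x$ if $x\in(\frac{1}{2k+1},\frac{1}{2k})$; $Tx=0$ if $x\in\{0\}\cup\{1/n\colon n\ge 2\}$. For $x\in(0,1)$, $d_1(x)=\lceil 1/x\rceil$ if $x\in[\frac{1}{2k},\frac{1}{2k-1})$ for some $k\in\mathbb{N}$, and $d_1(x)=\lfloor 1/x\rfloor$ if $x\in[\frac{1}{2k+1},\frac{1}{2k})$ for some $k\in\mathbb{N}$; $d_{n+1}(x)=d_1(T^nx)$. For $x\in\mathbb{I}$, $R_1(x)=d_1(x)$, $R_n(x)=d_n(x)/d_{n-1}(x)$ for $n\ge2$, and $M_n(x)=\max\{R_k(x)\colon 1\le k\le n\}$. *)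

theory Defs
  imports "HOL-Analysis.Analysis"
begin

definition SE_T :: "real \<Rightarrow> real" where
  "SE_T x =
     (if \<exists>k::nat. k \<ge> 1 \<and> 1 / real (2*k) < x \<and> x < 1 / real (2*k - 1)
      then real_of_int (ceiling (1/x)) * x - 1
      else if \<exists>k::nat. k \<ge> 1 \<and> 1 / real (2*k + 1) < x \<and> x < 1 / real (2*k)
      then 1 - real_of_int (floor (1/x)) * x
      else 0)"

definition SE_d1 :: "real \<Rightarrow> int" where
  "SE_d1 x =
     (if \<exists>k::nat. k \<ge> 1 \<and> 1 / real (2*k) \<le> x \<and> x < 1 / real (2*k - 1)
      then ceiling (1/x)
      else floor (1/x))"

definition SE_d :: "nat \<Rightarrow> real \<Rightarrow> int" where
  "SE_d n x = SE_d1 ((SE_T ^^ (n - 1)) x)"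

definition SE_R :: "nat \<Rightarrow> real \<Rightarrow> real" where
  "SE_R n x = (if n = 1 then real_of_int (SE_d 1 x)
               else real_of_int (SE_d n x) / real_of_int (SE_d (n - 1) x))"

definition SE_M :: "nat \<Rightarrow> real \<Rightarrow> real" where
  "SE_M n x = Max ((\<lambda>k. SE_R k x) ` {1..n})"

definition M_set :: "(nat \<Rightarrow> real) \<Rightarrow> real set" where
  "M_set \<phi> = {x \<in> {0<..<1} - \<rat>. infinite {n. n \<ge> 1 \<and> SE_M n x \<ge> \<phi> n}}"

end

theory Submission
  imports Defs
begin

lemma inv_lt_iff: "a > 0 \<Longrightarrow> y > 0 \<Longrightarrow> (1/a < (y::real)) \<longleftrightarrow> 1/y < a"
  by (simp add: field_simps)
lemma lt_inv_iff: "a > 0 \<Longrightarrow> y > 0 \<Longrightarrow> ((y::real) < 1/a) \<longleftrightarrow> a < 1/y"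
  by (simp add: field_simps)
lemma le_inv_iff: "a > 0 \<Longrightarrow> y > 0 \<Longrightarrow> (1/a \<le> (y::real)) \<longleftrightarrow> 1/y \<le> a"
  by (simp add: field_simps)

lemma piece:
  fixes y :: real
  assumes y: "0 < y" "y < 1" "y \<notin> \<rat>"
  defines "k \<equiv> nat \<lfloor>(1/y + 1)/2\<rfloor>"
  shows "k \<ge> 1" "2*real k - 1 < 1/y" "1/y < 2*real k + 1" "1/y \<noteq> 2 * real k"
    "SE_d1 y = 2 * int k"
    "SE_T y = (if 1/y < 2 * real k then 2*real k*y - 1 else 1 - 2*real k*y)"
proof -
  define u where "u = 1/y"
  have u1: "u > 1" using y unfolding u_def by (simp add: field_simps)
  have uirr: "u \<notin> \<rat>" using y unfolding u_def
    by (metis Rats_divide Rats_1 div_by_1 divide_divide_eq_right mult_1)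
  have fl: "real_of_int \<lfloor>(u+1)/2\<rfloor> \<le> (u+1)/2" "(u+1)/2 < real_of_int \<lfloor>(u+1)/2\<rfloor> + 1"
    by linarith+
  have "1 \<le> (u+1)/2" using u1 by simp
  then have flpos: "\<lfloor>(u+1)/2\<rfloor> \<ge> 1" by (metis floor_mono floor_one)
  have kk: "real k = real_of_int \<lfloor>(u+1)/2\<rfloor>" unfolding k_def u_def[symmetric] using flpos by simp
  show k1: "k \<ge> 1" unfolding k_def u_def[symmetric] using flpos by linarith
  have neq: "(u+1)/2 \<noteq> real_of_int \<lfloor>(u+1)/2\<rfloor>"
  proof
    assume "(u+1)/2 = real_of_int \<lfloor>(u+1)/2\<rfloor>"
    then have "u = 2 * real_of_int \<lfloor>(u+1)/2\<rfloor> - 1" by (simp add: field_simps)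
    then have "u \<in> \<rat>" by (metis Rats_of_int Rats_mult Rats_diff Rats_number_of Rats_1)
    with uirr show False by simp
  qed
  obtain F where F: "F = real_of_int \<lfloor>(u+1)/2\<rfloor>" by blast
  have F1: "F < (u+1)/2" "(u+1)/2 < F + 1" using fl neq unfolding F[symmetric] by auto
  have a': "2*F - 1 < u" "u < 2*F + 1" using F1 by (auto simp: field_simps)
  show a: "2*real k - 1 < 1/y" "1/y < 2*real k + 1" using a' kk F unfolding u_def by auto
  have uneq: "u \<noteq> 2 * real k"
  proof
    assume "u = 2 * real k" then have "u \<in> \<rat>" by (metis Rats_of_nat Rats_mult Rats_number_of)
    with uirr show False by simp
  qed
  then show "1/y \<noteq> 2 * real k" unfolding u_def .
  have r1: "real (2*k - 1) = 2 * real k - 1" using k1 by (simp add: of_nat_diff)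
  have pos1: "real (2*k') > 0" "real (2*k' - 1) > 0" if "k' \<ge> 1" for k'::nat using that by (simp_all add: of_nat_diff)
  have r1': "real (2*k' - 1) = 2 * real k' - 1" if "k' \<ge> 1" for k'::nat using that by (simp add: of_nat_diff)
  show "SE_d1 y = 2 * int k"
  proof (cases "u < 2 * real k")
    case True
    have "\<exists>k'::nat. k' \<ge> 1 \<and> 1 / real (2*k') \<le> y \<and> y < 1 / real (2*k' - 1)"
      apply (rule exI[of _ k])
      using k1 True a y r1 pos1[OF k1] unfolding u_def
      by (simp add: le_inv_iff lt_inv_iff)
    moreover have "\<lceil>1/y\<rceil> = 2 * int k" using True a unfolding u_def
      by (intro ceiling_unique) auto
    ultimately show ?thesis unfolding SE_d1_def by simp
  next
    case False
    then have gt: "u > 2 * real k" using uneq by simp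
    have nex: "\<not> (\<exists>k'::nat. k' \<ge> 1 \<and> 1 / real (2*k') \<le> y \<and> y < 1 / real (2*k' - 1))"
    proof
      assume "\<exists>k'::nat. k' \<ge> 1 \<and> 1 / real (2*k') \<le> y \<and> y < 1 / real (2*k' - 1)"
      then obtain k' :: nat where k': "k' \<ge> 1" "1 / real (2*k') \<le> y" "y < 1 / real (2*k' - 1)" by blast
      then have "u \<le> 2 * real k'" "2 * real k' - 1 < u"
        using pos1[OF k'(1)] y r1'[OF k'(1)] unfolding u_def by (simp_all add: le_inv_iff lt_inv_iff)
      then have "real k < real k'" "real k' < real k + 1" using gt a unfolding u_def by linarith+
      then have "k < k'" "k' < k + 1" by (simp_all only: of_nat_less_iff flip: of_nat_Suc) then show False by linarith
    qed
    moreover have fl2: "\<lfloor>1/y\<rfloor> = 2 * int k" using gt a unfolding u_def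
      by (intro floor_unique) auto
    ultimately show ?thesis unfolding SE_d1_def if_not_P[OF nex] using fl2 by simp
  qed
  show "SE_T y = (if 1/y < 2 * real k then 2*real k*y - 1 else 1 - 2*real k*y)"
  proof (cases "u < 2 * real k")
    case True
    have "\<exists>k'::nat. k' \<ge> 1 \<and> 1 / real (2*k') < y \<and> y < 1 / real (2*k' - 1)"
      apply (rule exI[of _ k])
      using k1 True a y r1 pos1[OF k1] unfolding u_def
      by (simp add: inv_lt_iff lt_inv_iff)
    moreover have "\<lceil>1/y\<rceil> = 2 * int k" using True a unfolding u_def
      by (intro ceiling_unique) auto
    ultimately show ?thesis unfolding SE_T_def using True unfolding u_def by simp
  next
    case False
    then have gt: "u > 2 * real k" using uneq by simp
    have nex: "\<not> (\<exists>k'::nat. k' \<ge> 1 \<and> 1 / real (2*k') < y \<and> y < 1 / real (2*k' - 1))"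
    proof
      assume "\<exists>k'::nat. k' \<ge> 1 \<and> 1 / real (2*k') < y \<and> y < 1 / real (2*k' - 1)"
      then obtain k' :: nat where k': "k' \<ge> 1" "1 / real (2*k') < y" "y < 1 / real (2*k' - 1)" by blast
      then have "u < 2 * real k'" "2 * real k' - 1 < u"
        using pos1[OF k'(1)] y r1'[OF k'(1)] unfolding u_def by (simp_all add: inv_lt_iff lt_inv_iff)
      then have "real k < real k'" "real k' < real k + 1" using gt a unfolding u_def by linarith+
      then have "k < k'" "k' < k + 1" by (simp_all only: of_nat_less_iff flip: of_nat_Suc) then show False by linarith
    qed
    moreover have ex2: "\<exists>k'::nat. k' \<ge> 1 \<and> 1 / real (2*k' + 1) < y \<and> y < 1 / real (2*k')"
      apply (rule exI[of _ k])
      using k1 gt a y pos1[OF k1] unfolding u_def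
      by (simp add: inv_lt_iff lt_inv_iff)
    moreover have fl2: "\<lfloor>1/y\<rfloor> = 2 * int k" using gt a unfolding u_def
      by (intro floor_unique) auto
    ultimately show ?thesis unfolding SE_T_def if_not_P[OF nex] if_P[OF ex2] using fl2 False unfolding u_def by simp
  qed
qed


definition Iv :: "nat \<Rightarrow> real set" where "Iv j = {0<..<1/(2*real j - 1)}"
definition pc :: "nat \<Rightarrow> real set" where "pc k = {1/(2*real k+1)<..<1/(2*real k - 1)}"

lemma pc_iff:
  assumes "k \<ge> 1" "y > 0"
  shows "y \<in> pc k \<longleftrightarrow> 2*real k - 1 < 1/y \<and> 1/y < 2*real k + 1"
proof -
  have "2*real k - 1 > 0" "2 * real k + 1 > 0" using assms by auto
  then show ?thesis unfolding pc_def using assms by (auto simp: inv_lt_iff lt_inv_iff)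
qed

lemma piece_ex:
  assumes "0 < y" "y < 1" "y \<notin> \<rat>"
  shows "\<exists>k\<ge>1. y \<in> pc k"
  using piece[OF assms] pc_iff assms by blast

lemma piece2:
  assumes k: "k \<ge> 1" and y: "y \<in> pc k" "y \<notin> \<rat>"
  shows "SE_d1 y = 2 * int k" "y \<noteq> 1/(2*real k)"
    "SE_T y = (if 1/(2*real k) < y then 2*real k*y - 1 else 1 - 2*real k*y)"
proof -
  have "1/(2*real k+1) > 0" by simp
  moreover have "y > 1/(2*real k+1)" using y unfolding pc_def by simp
  ultimately have yp: "y > 0" by linarith
  have "real k \<ge> 1" using k by simp
  then have "1/(2*real k - 1) \<le> 1" by (simp add: divide_le_eq_1)
  moreover have "y < 1/(2*real k - 1)" using y unfolding pc_def by simp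
  ultimately have y1: "y < 1" by linarith
  define k0 where "k0 = nat \<lfloor>(1/y + 1)/2\<rfloor>"
  note P = piece[OF yp y1 y(2), folded k0_def]
  have "2*real k - 1 < 1/y \<and> 1/y < 2*real k + 1" using pc_iff[OF k yp] y by blast
  with P(2,3) have "real k < real k0 + 1" "real k0 < real k + 1" by linarith+
  then have "k < k0 + 1" "k0 < k + 1" by linarith+
  then have kk: "k0 = k" by linarith
  show "SE_d1 y = 2 * int k" using P(5) kk by simp
  have "1/y \<noteq> 2 * real k" using P(4) kk by simp
  then show ne: "y \<noteq> 1/(2*real k)" by auto
  have "(1/y < 2 * real k) \<longleftrightarrow> 1/(2*real k) < y" using yp k by (simp add: inv_lt_iff)
  then show "SE_T y = (if 1/(2*real k) < y then 2*real k*y - 1 else 1 - 2*real k*y)"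
    using P(6) kk by simp
qed


lemma affine_pre:
  fixes c b :: real
  assumes c: "c \<noteq> 0" and A: "A \<in> sets lebesgue"
  shows "{y. b + c*y \<in> A} \<in> sets lebesgue"
    and "emeasure lebesgue {y. b + c*y \<in> A} = ennreal (1/\<bar>c\<bar>) * emeasure lebesgue A"
proof -
  have m: "(\<lambda>x. b + c * x) \<in> lebesgue \<rightarrow>\<^sub>M lebesgue"
    using lebesgue_affine_measurable[where c="\<lambda>_::real. c" and t=b] c by simp
  have eq: "{y. b + c*y \<in> A} = (\<lambda>x. b + c * x) -` A \<inter> space lebesgue" by auto
  show "{y. b + c*y \<in> A} \<in> sets lebesgue"
    unfolding eq using m A by (rule measurable_sets)
  have eq2: "{y. b + c*y \<in> A} = (\<lambda>x. (1/c) *\<^sub>R x + (-b/c)) ` A"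
  proof safe
    fix y assume "b + c*y \<in> A"
    then show "y \<in> (\<lambda>x. (1/c) *\<^sub>R x + (-b/c)) ` A"
      by (intro image_eqI[where x="b+c*y"]) (use c in \<open>auto simp: field_simps\<close>)
  next
    fix x assume "x \<in> A" then show "b + c * ((1/c) *\<^sub>R x + (-b/c)) \<in> A"
      using c by (simp add: field_simps)
  qed
  show "emeasure lebesgue {y. b + c*y \<in> A} = ennreal (1/\<bar>c\<bar>) * emeasure lebesgue A"
    unfolding eq2 emeasure_lebesgue_affine by simp
qed


lemma Q_null: "(\<rat>::real set) \<in> null_sets lebesgue"
proof -
  have "(\<rat>::real set) \<in> null_sets lborel" by (rule countable_imp_null_set_lborel[OF countable_rat])
  then show ?thesis by (rule null_sets_completionI)
qed

lemma Q_sets: "(\<rat>::real set) \<in> sets lebesgue"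
  using Q_null by auto

lemma emeasure_leb_Ioo: "l \<le> u \<Longrightarrow> emeasure lebesgue {l<..<(u::real)} = ennreal (u - l)"
  by simp

lemma emeasure_leb_Ioo_Q: "l \<le> u \<Longrightarrow> emeasure lebesgue ({l<..<(u::real)} - \<rat>) = ennreal (u - l)"
  by (subst emeasure_Diff_null_set[OF Q_null]) auto

lemma Iv_sets[simp]: "Iv j \<in> sets lebesgue" unfolding Iv_def by simp
lemma pc_sets[simp]: "pc j \<in> sets lebesgue" unfolding pc_def by simp


lemma Iv_Suc: "Iv (Suc k) = {0<..<1/(2*real k + 1)}"
  unfolding Iv_def by (simp add: algebra_simps)

lemma Iv_pc_le:
  assumes "j \<ge> 1" "k \<ge> 1" "y \<in> Iv j" "y \<in> pc k" shows "j \<le> k"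
proof -
  have y: "y > 0" "y < 1/(2*real j - 1)" using assms(3) unfolding Iv_def by auto
  have "2*real j - 1 > 0" using assms by simp
  then have a: "2*real j - 1 < 1/y" using y by (simp add: lt_inv_iff)
  have b: "1/y < 2*real k + 1" using pc_iff[OF assms(2) y(1)] assms(4) by blast
  from a b have "real j < real k + 1" by linarith
  then show ?thesis by linarith
qed

lemma pc_sub_Iv:
  assumes "1 \<le> j" "j \<le> k" shows "pc k \<subseteq> Iv j"
proof
  fix y assume y: "y \<in> pc k"
  have "1/(2*real k+1) > 0" by simp
  moreover have "y > 1/(2*real k+1)" "y < 1/(2*real k - 1)" using y unfolding pc_def by auto
  moreover have "1/(2*real k - 1) \<le> 1/(2*real j - 1)"
    using assms by (intro divide_left_mono) auto
  ultimately have "y > 0" "y < 1/(2*real j - 1)" by linarith+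
  then show "y \<in> Iv j" unfolding Iv_def by auto
qed

lemma Iv_sub01: "j \<ge> 1 \<Longrightarrow> Iv j \<subseteq> {0<..<1}"
proof
  fix y assume j: "j \<ge> 1" and y: "y \<in> Iv j"
  have "real j \<ge> 1" using j by simp
  then have "1/(2*real j - 1) \<le> 1" by (simp add: divide_le_eq_1)
  then show "y \<in> {0<..<1}" using y unfolding Iv_def by auto
qed

lemma P1_iff:
  assumes "k \<ge> 1"
  shows "(-1 + 2*real k * y \<in> Iv k) \<longleftrightarrow> (1/(2*real k) < y \<and> y < 1/(2*real k - 1))"
proof -
  have k: "real k \<ge> 1" using assms by simp
  have "0 < -1 + 2*real k * y \<longleftrightarrow> 1/(2*real k) < y" using k by (simp add: field_simps)
  moreover have "-1 + 2*real k * y < 1/(2*real k - 1) \<longleftrightarrow> y < 1/(2*real k - 1)"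
  proof -
    have p: "2*real k - 1 > 0" using k by simp
    have "-1 + 2*real k * y < 1/(2*real k - 1) \<longleftrightarrow> (-1 + 2*real k * y) * (2*real k - 1) < 1"
      using p by (simp add: less_divide_eq)
    also have "\<dots> \<longleftrightarrow> 2*real k * (y * (2*real k - 1)) < 2*real k * 1" by (simp add: algebra_simps)
    also have "\<dots> \<longleftrightarrow> y * (2*real k - 1) < 1" using k by (subst mult_less_cancel_left_pos) auto
    also have "\<dots> \<longleftrightarrow> y < 1/(2*real k - 1)" using p by (simp add: less_divide_eq)
    finally show ?thesis .
  qed
  ultimately show ?thesis unfolding Iv_def by auto
qed

lemma P2_iff:
  assumes "k \<ge> 1"
  shows "(1 + (- (2*real k)) * y \<in> Iv (Suc k)) \<longleftrightarrow> (1/(2*real k + 1) < y \<and> y < 1/(2*real k))"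
proof -
  have k: "real k \<ge> 1" using assms by simp
  have "0 < 1 + (- (2*real k)) * y \<longleftrightarrow> y < 1/(2*real k)" using k by (simp add: field_simps)
  moreover have "1 + (- (2*real k)) * y < 1/(2*real k + 1) \<longleftrightarrow> 1/(2*real k + 1) < y"
  proof -
    have p: "2*real k + 1 > 0" using k by simp
    have "1 + (- (2*real k)) * y < 1/(2*real k + 1) \<longleftrightarrow> (1 + (- (2*real k)) * y) * (2*real k + 1) < 1"
      using p by (simp add: less_divide_eq)
    also have "\<dots> \<longleftrightarrow> 2*real k * 1 < 2*real k * (y * (2*real k + 1))" by (simp add: algebra_simps)
    also have "\<dots> \<longleftrightarrow> 1 < y * (2*real k + 1)" using k by (subst mult_less_cancel_left_pos) auto
    also have "\<dots> \<longleftrightarrow> 1/(2*real k + 1) < y" using p by (simp add: divide_less_eq)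
    finally show ?thesis .
  qed
  ultimately show ?thesis unfolding Iv_Suc by auto
qed

lemma halves_pc:
  assumes "k \<ge> 1"
  shows "1/(2*real k) < y \<Longrightarrow> y < 1/(2*real k - 1) \<Longrightarrow> y \<in> pc k"
    and "1/(2*real k + 1) < y \<Longrightarrow> y < 1/(2*real k) \<Longrightarrow> y \<in> pc k"
proof -
  have k: "real k \<ge> 1" using assms by simp
  have "1/(2*real k + 1) < 1/(2*real k)" "1/(2*real k) < 1/(2*real k - 1)"
    using k by (auto intro!: divide_strict_left_mono)
  then show "1/(2*real k) < y \<Longrightarrow> y < 1/(2*real k - 1) \<Longrightarrow> y \<in> pc k"
    "1/(2*real k + 1) < y \<Longrightarrow> y < 1/(2*real k) \<Longrightarrow> y \<in> pc k"
    unfolding pc_def by auto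
qed


lemma frac_id: "(a::real) > 1 \<Longrightarrow> 1/a * (\<rho>/(a-1)) + 1/a*(\<rho>/(a+1)) = \<rho>*(1/(a-1) - 1/(a+1))"
proof -
  assume a: "a > 1"
  define D where "D = a * (a-1) * (a+1)"
  have p: "a - 1 \<noteq> 0" "a + 1 \<noteq> 0" "a \<noteq> 0" using a by auto
  have D: "D \<noteq> 0" unfolding D_def using p by simp
  have l: "(1/a * (\<rho>/(a-1)) + 1/a*(\<rho>/(a+1))) * D = 2 * a * \<rho>"
  proof -
    have "(1/a * (\<rho>/(a-1))) * D = \<rho> * (a+1)" unfolding D_def using p by simp
    moreover have "(1/a * (\<rho>/(a+1))) * D = \<rho> * (a-1)" unfolding D_def using p by simp
    ultimately show ?thesis by (simp add: distrib_right algebra_simps)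
  qed
  have r: "(\<rho>*(1/(a-1) - 1/(a+1))) * D = 2 * a * \<rho>"
  proof -
    have "(1/(a-1)) * D = a * (a+1)" unfolding D_def using p by simp
    moreover have "(1/(a+1)) * D = a * (a-1)" unfolding D_def using p by simp
    ultimately have "(1/(a-1) - 1/(a+1)) * D = 2 * a" by (simp add: left_diff_distrib algebra_simps)
    then have "\<rho> * ((1/(a-1) - 1/(a+1)) * D) = \<rho> * (2 * a)" by simp
    then show ?thesis by (simp only: mult.assoc) (simp add: algebra_simps)
  qed
  have "(1/a * (\<rho>/(a-1)) + 1/a*(\<rho>/(a+1))) * D = (\<rho>*(1/(a-1) - 1/(a+1))) * D"
    using l r by (simp only:)
  then show ?thesis using D by (metis mult_right_cancel)
qed

lemma pc_measure: "k \<ge> 1 \<Longrightarrow> emeasure lebesgue (pc k - \<rat>) = ennreal (1/(2*real k - 1) - 1/(2*real k + 1))"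
proof -
  assume k: "k \<ge> 1"
  have "1/(2*real k + 1) \<le> 1/(2*real k - 1)" using k by (intro divide_left_mono) auto
  then show ?thesis unfolding pc_def by (rule emeasure_leb_Ioo_Q)
qed

lemma GL:
  fixes j :: nat and B :: "int \<Rightarrow> real set" and C :: "int \<Rightarrow> bool" and \<rho> :: real
  assumes j: "j \<ge> 1" and \<rho>: "\<rho> \<ge> 0"
    and Bm: "\<And>k. k \<ge> 1 \<Longrightarrow> B (2 * int k) \<in> sets lebesgue"
    and Bb: "\<And>k. k \<ge> 1 \<Longrightarrow> emeasure lebesgue (B (2*int k) \<inter> Iv k) \<le> ennreal (\<rho> / (2*real k - 1))"
    and Bb': "\<And>k. k \<ge> 1 \<Longrightarrow> emeasure lebesgue (B (2*int k) \<inter> Iv (Suc k)) \<le> ennreal (\<rho> / (2*real k + 1))"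
  shows "{y \<in> Iv j - \<rat>. C (SE_d1 y) \<and> SE_T y \<in> B (SE_d1 y)} \<in> sets lebesgue"
    "{y \<in> Iv j - \<rat>. C (SE_d1 y)} \<in> sets lebesgue"
    "emeasure lebesgue {y \<in> Iv j - \<rat>. C (SE_d1 y) \<and> SE_T y \<in> B (SE_d1 y)}
       \<le> ennreal \<rho> * emeasure lebesgue {y \<in> Iv j - \<rat>. C (SE_d1 y)}"
proof -
  define P1 where "P1 k = {y. -1 + (2*real k)*y \<in> B(2*int k) \<inter> Iv k} - \<rat>" for k
  define P2 where "P2 k = {y. 1 + (-(2*real k))*y \<in> B(2*int k) \<inter> Iv (Suc k)} - \<rat>" for k
  define S where "S k = (if j \<le> k \<and> C (2*int k) then P1 k \<union> P2 k else {})" for k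
  define Tg where "Tg k = (if j \<le> k \<and> C (2*int k) then pc k - \<rat> else {})" for k
  have P1m: "P1 k \<in> sets lebesgue" if "k \<ge> 1" for k
    unfolding P1_def using that Bm[OF that]
    by (intro sets.Diff Q_sets affine_pre(1)) auto
  have P2m: "P2 k \<in> sets lebesgue" if "k \<ge> 1" for k
    unfolding P2_def using that Bm[OF that]
    by (intro sets.Diff Q_sets affine_pre(1)) auto
  have Sm: "S k \<in> sets lebesgue" for k
    unfolding S_def using P1m P2m j by auto
  have Tgm: "Tg k \<in> sets lebesgue" for k
    unfolding Tg_def by (auto intro: sets.Diff Q_sets)
  have eqS: "{y \<in> Iv j - \<rat>. C (SE_d1 y) \<and> SE_T y \<in> B (SE_d1 y)} = (\<Union>k. S k)"
  proof (intro equalityI subsetI)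
    fix y assume "y \<in> {y \<in> Iv j - \<rat>. C (SE_d1 y) \<and> SE_T y \<in> B (SE_d1 y)}"
    then have y: "y \<in> Iv j" "y \<notin> \<rat>" "C (SE_d1 y)" "SE_T y \<in> B (SE_d1 y)" by auto
    have y01: "0 < y" "y < 1" using Iv_sub01[OF j] y(1) by auto
    obtain k where k: "k \<ge> 1" "y \<in> pc k" using piece_ex[OF y01 y(2)] by blast
    have jk: "j \<le> k" using Iv_pc_le[OF j k(1) y(1) k(2)] .
    note pp = piece2[OF k y(2)]
    have pcy: "1/(2*real k+1) < y" "y < 1/(2*real k - 1)" using k(2) unfolding pc_def by auto
    show "y \<in> (\<Union>k. S k)"
    proof (cases "1/(2*real k) < y")
      case True
      then have "SE_T y = -1 + 2*real k*y" using pp by simp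
      then have "y \<in> P1 k" unfolding P1_def using y pp(1) P1_iff[OF k(1)] True pcy by auto
      then show ?thesis unfolding S_def using jk y(3) pp(1) by auto
    next
      case False
      then have lt: "y < 1/(2*real k)" using pp(2) by auto
      from False have "SE_T y = 1 + (-(2*real k))*y" using pp by simp
      then have "y \<in> P2 k" unfolding P2_def using y pp(1) P2_iff[OF k(1)] lt pcy by auto
      then show ?thesis unfolding S_def using jk y(3) pp(1) by auto
    qed
  next
    fix y assume "y \<in> (\<Union>k. S k)"
    then obtain k where yS: "y \<in> S k" by auto
    then have jk: "j \<le> k" "C (2*int k)" unfolding S_def by (auto split: if_splits)
    have k: "k \<ge> 1" using jk j by simp
    from yS jk have "y \<in> P1 k \<or> y \<in> P2 k" unfolding S_def by auto
    then have "y \<in> Iv j \<and> y \<notin> \<rat> \<and> C (SE_d1 y) \<and> SE_T y \<in> B (SE_d1 y)"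
    proof (elim disjE)
      assume y: "y \<in> P1 k"
      then have yy: "1/(2*real k) < y" "y < 1/(2*real k - 1)" "y \<notin> \<rat>" "-1 + 2*real k*y \<in> B (2*int k)"
        unfolding P1_def using P1_iff[OF k] by auto
      have ypc: "y \<in> pc k" using halves_pc(1)[OF k yy(1,2)] .
      note pp = piece2[OF k ypc yy(3)]
      show "y \<in> Iv j \<and> y \<notin> \<rat> \<and> C (SE_d1 y) \<and> SE_T y \<in> B (SE_d1 y)"
        using pc_sub_Iv[OF j jk(1)] ypc yy pp jk by auto
    next
      assume y: "y \<in> P2 k"
      then have yy: "1/(2*real k + 1) < y" "y < 1/(2*real k)" "y \<notin> \<rat>" "1 + (-(2*real k))*y \<in> B (2*int k)"
        unfolding P2_def using P2_iff[OF k] by auto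
      have ypc: "y \<in> pc k" using halves_pc(2)[OF k yy(1,2)] .
      note pp = piece2[OF k ypc yy(3)]
      show "y \<in> Iv j \<and> y \<notin> \<rat> \<and> C (SE_d1 y) \<and> SE_T y \<in> B (SE_d1 y)"
        using pc_sub_Iv[OF j jk(1)] ypc yy pp jk by auto
    qed
    then show "y \<in> {y \<in> Iv j - \<rat>. C (SE_d1 y) \<and> SE_T y \<in> B (SE_d1 y)}" by auto
  qed
  have eqT: "{y \<in> Iv j - \<rat>. C (SE_d1 y)} = (\<Union>k. Tg k)"
  proof (intro equalityI subsetI)
    fix y assume "y \<in> {y \<in> Iv j - \<rat>. C (SE_d1 y)}"
    then have y: "y \<in> Iv j" "y \<notin> \<rat>" "C (SE_d1 y)" by auto
    have y01: "0 < y" "y < 1" using Iv_sub01[OF j] y(1) by auto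
    obtain k where k: "k \<ge> 1" "y \<in> pc k" using piece_ex[OF y01 y(2)] by blast
    have jk: "j \<le> k" using Iv_pc_le[OF j k(1) y(1) k(2)] .
    note pp = piece2[OF k y(2)]
    show "y \<in> (\<Union>k. Tg k)" unfolding Tg_def using jk k y pp by (auto intro!: exI[of _ k])
  next
    fix y assume "y \<in> (\<Union>k. Tg k)"
    then obtain k where yS: "y \<in> Tg k" by auto
    then have jk: "j \<le> k" "C (2*int k)" "y \<in> pc k" "y \<notin> \<rat>" unfolding Tg_def by (auto split: if_splits)
    have k: "k \<ge> 1" using jk j by simp
    show "y \<in> {y \<in> Iv j - \<rat>. C (SE_d1 y)}"
      using pc_sub_Iv[OF j jk(1)] piece2[OF k jk(3,4)] jk by auto
  qed
  show "{y \<in> Iv j - \<rat>. C (SE_d1 y) \<and> SE_T y \<in> B (SE_d1 y)} \<in> sets lebesgue"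
    unfolding eqS using Sm by auto
  show "{y \<in> Iv j - \<rat>. C (SE_d1 y)} \<in> sets lebesgue"
    unfolding eqT using Tgm by auto
  have disj: "disjoint_family Tg" unfolding disjoint_family_on_def
  proof (intro ballI impI)
    fix m n :: nat assume "m \<noteq> n"
    show "Tg m \<inter> Tg n = {}"
    proof (rule ccontr)
      assume "Tg m \<inter> Tg n \<noteq> {}"
      then obtain y where y: "y \<in> Tg m" "y \<in> Tg n" by blast
      then have mn: "j \<le> m" "j \<le> n" "y \<in> pc m" "y \<in> pc n" "y \<notin> \<rat>" unfolding Tg_def by (auto split: if_splits)
      have "SE_d1 y = 2 * int m" "SE_d1 y = 2 * int n"
        using piece2(1)[of m y] piece2(1)[of n y] mn j by auto
      then show False using \<open>m \<noteq> n\<close> by simp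
    qed
  qed
  have Sb: "emeasure lebesgue (S k) \<le> ennreal \<rho> * emeasure lebesgue (Tg k)" for k
  proof (cases "j \<le> k \<and> C (2*int k)")
    case False then show ?thesis unfolding S_def Tg_def if_not_P[OF False] by simp
  next
    case True
    then have k: "k \<ge> 1" using j by simp
    have kr: "real k \<ge> 1" using k by simp
    have c1: "2*real k \<noteq> 0" "-(2*real k) \<noteq> 0" using kr by auto
    have m1: "B (2 * int k) \<inter> Iv k \<in> sets lebesgue" "B (2 * int k) \<inter> Iv (Suc k) \<in> sets lebesgue"
      using Bm[OF k] by auto
    have e1: "emeasure lebesgue (P1 k) \<le> ennreal (1/(2*real k)) * ennreal (\<rho> / (2*real k - 1))"
    proof -
      have "emeasure lebesgue (P1 k) \<le> emeasure lebesgue {y. -1 + (2*real k)*y \<in> B(2*int k) \<inter> Iv k}"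
        unfolding P1_def by (rule emeasure_mono[OF _ affine_pre(1)[OF c1(1) m1(1)]]) auto
      also have "\<dots> = ennreal (1/(2*real k)) * emeasure lebesgue (B(2*int k) \<inter> Iv k)"
        by (subst affine_pre(2)[OF c1(1) m1(1)]) (use kr in simp)
      also have "\<dots> \<le> ennreal (1/(2*real k)) * ennreal (\<rho> / (2*real k - 1))"
        by (intro mult_left_mono Bb[OF k]) auto
      finally show ?thesis .
    qed
    have e2: "emeasure lebesgue (P2 k) \<le> ennreal (1/(2*real k)) * ennreal (\<rho> / (2*real k + 1))"
    proof -
      have "emeasure lebesgue (P2 k) \<le> emeasure lebesgue {y. 1 + (-(2*real k))*y \<in> B(2*int k) \<inter> Iv (Suc k)}"
        unfolding P2_def by (rule emeasure_mono[OF _ affine_pre(1)[OF c1(2) m1(2)]]) auto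
      also have "\<dots> = ennreal (1/(2*real k)) * emeasure lebesgue (B(2*int k) \<inter> Iv (Suc k))"
        by (subst affine_pre(2)[OF c1(2) m1(2)]) (use kr in simp)
      also have "\<dots> \<le> ennreal (1/(2*real k)) * ennreal (\<rho> / (2*real k + 1))"
        by (intro mult_left_mono Bb'[OF k]) auto
      finally show ?thesis .
    qed
    have "emeasure lebesgue (S k) \<le> emeasure lebesgue (P1 k) + emeasure lebesgue (P2 k)"
      unfolding S_def if_P[OF True] by (rule emeasure_subadditive[OF P1m[OF k] P2m[OF k]])
    also have "\<dots> \<le> ennreal (1/(2*real k)) * ennreal (\<rho> / (2*real k - 1)) + ennreal (1/(2*real k)) * ennreal (\<rho> / (2*real k + 1))"
      using e1 e2 by (rule add_mono)
    also have "\<dots> = ennreal (\<rho> * (1/(2*real k - 1) - 1/(2*real k + 1)))"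
    proof -
      have p: "2*real k - 1 > 0" "2*real k + 1 > 0" "2 * real k > 0" using kr by auto
      have "(1/(2*real k)) * (\<rho> / (2*real k - 1)) + (1/(2*real k)) * (\<rho> / (2*real k + 1))
            = \<rho> * (1/(2*real k - 1) - 1/(2*real k + 1))"
        using frac_id[of "2*real k" \<rho>] kr by simp
      then show ?thesis using p \<rho>
        by (simp add: ennreal_mult[symmetric] ennreal_plus[symmetric] del: ennreal_plus)
    qed
    also have "\<dots> = ennreal \<rho> * emeasure lebesgue (Tg k)"
    proof -
      have "1/(2*real k + 1) \<le> 1/(2*real k - 1)" using kr by (intro divide_left_mono) auto
      then have nn: "0 \<le> 1/(2*real k - 1) - 1/(2*real k + 1)" by simp
      show ?thesis unfolding Tg_def if_P[OF True] pc_measure[OF k] by (rule ennreal_mult[OF \<rho> nn])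
    qed
    finally show ?thesis .
  qed
  have "emeasure lebesgue (\<Union>k. S k) \<le> (\<Sum>k. emeasure lebesgue (S k))"
    using Sm by (intro emeasure_subadditive_countably) auto
  also have "\<dots> \<le> (\<Sum>k. ennreal \<rho> * emeasure lebesgue (Tg k))"
    using Sb by (intro suminf_le) auto
  also have "\<dots> = ennreal \<rho> * emeasure lebesgue (\<Union>k. Tg k)"
  proof -
    have "(\<Sum>k. emeasure lebesgue (Tg k)) = emeasure lebesgue (\<Union>k. Tg k)"
      by (rule suminf_emeasure) (use Tgm disj in auto)
    then show ?thesis by (simp only: ennreal_suminf_cmult)
  qed
  finally show "emeasure lebesgue {y \<in> Iv j - \<rat>. C (SE_d1 y) \<and> SE_T y \<in> B (SE_d1 y)}
       \<le> ennreal \<rho> * emeasure lebesgue {y \<in> Iv j - \<rat>. C (SE_d1 y)}"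
    unfolding eqS eqT .
qed


lemma d1_ge_iff:
  assumes y: "0 < y" "y < 1" "y \<notin> \<rat>" and m: "m \<ge> 1"
  shows "SE_d1 y \<ge> 2 * int m \<longleftrightarrow> y < 1/(2*real m - 1)"
proof -
  obtain k where k: "k \<ge> 1" "y \<in> pc k" using piece_ex[OF y] by blast
  have d: "SE_d1 y = 2 * int k" using piece2(1)[OF k y(3)] .
  have pcy: "1/(2*real k+1) < y" "y < 1/(2*real k - 1)" using k(2) unfolding pc_def by auto
  show ?thesis
  proof (cases "m \<le> k")
    case True
    have "1/(2*real k - 1) \<le> 1/(2*real m - 1)" using True m by (intro divide_left_mono) auto
    then show ?thesis using d True pcy by auto
  next
    case False
    then have "real k + 1 \<le> real m" by simp
    then have "1/(2*real m - 1) \<le> 1/(2*real k + 1)" using k by (intro divide_left_mono) auto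
    then show ?thesis using d False pcy by auto
  qed
qed

lemma d1_even:
  assumes y: "0 < y" "y < 1" "y \<notin> \<rat>"
  shows "\<exists>k\<ge>1. SE_d1 y = 2 * int k"
  using piece_ex[OF y] piece2(1) y(3) by blast

lemma d1_ge_real_iff:
  fixes s :: real
  assumes y: "0 < y" "y < 1" "y \<notin> \<rat>"
  defines "m \<equiv> max 1 (nat \<lceil>s/2\<rceil>)"
  shows "real_of_int (SE_d1 y) \<ge> s \<longleftrightarrow> y < 1/(2*real m - 1)"
proof -
  obtain k where k: "k \<ge> 1" "SE_d1 y = 2 * int k" using d1_even[OF y] by blast
  have m1: "m \<ge> 1" unfolding m_def by simp
  have "real_of_int (SE_d1 y) \<ge> s \<longleftrightarrow> s/2 \<le> real k" using k by auto
  also have "\<dots> \<longleftrightarrow> \<lceil>s/2\<rceil> \<le> int k" by (simp only: ceiling_le_iff of_int_of_nat_eq)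
  also have "\<dots> \<longleftrightarrow> m \<le> k" unfolding m_def max.bounded_iff nat_le_iff using k(1) by blast
  also have "\<dots> \<longleftrightarrow> SE_d1 y \<ge> 2 * int m" using k by simp
  also have "\<dots> \<longleftrightarrow> y < 1/(2*real m - 1)" by (rule d1_ge_iff[OF y m1])
  finally show ?thesis .
qed

lemma thr_set:
  fixes s :: real
  assumes j: "j \<ge> 1"
  defines "m \<equiv> max 1 (nat \<lceil>s/2\<rceil>)"
  shows "{y \<in> Iv j - \<rat>. real_of_int (SE_d1 y) \<ge> s} = {0<..<min (1/(2*real j - 1)) (1/(2*real m - 1))} - \<rat>"
proof -
  have "y \<in> Iv j \<Longrightarrow> 0 < y \<and> y < 1" for y using Iv_sub01[OF j] by auto
  then show ?thesis using d1_ge_real_iff[of _ s] unfolding m_def Iv_def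
    by (auto simp: Iv_def)
qed


lemma m_bounds:
  fixes t :: real
  assumes k: "k \<ge> 1" and t: "t > 0"
  defines "m \<equiv> max 1 (nat \<lceil>t * real_of_int (2 * int k) / 2\<rceil>)"
  shows "real m \<ge> t * real k" "real m \<le> max 1 t * real k + 1" "m \<ge> 1"
proof -
  have e: "t * real_of_int (2 * int k) / 2 = t * real k" by simp
  have c1: "real_of_int \<lceil>t * real k\<rceil> \<ge> t * real k" by (rule le_of_int_ceiling)
  have c2: "real_of_int \<lceil>t * real k\<rceil> < t * real k + 1" using ceiling_correct[of "t * real k"] by linarith
  have pos: "t * real k > 0" using k t by simp
  then have cpos: "\<lceil>t * real k\<rceil> \<ge> 0" by linarith
  have nn: "real (nat \<lceil>t * real k\<rceil>) = real_of_int \<lceil>t * real k\<rceil>" using cpos by simp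
  have m: "real m = max 1 (real_of_int \<lceil>t * real k\<rceil>)" unfolding m_def e using nn
    by (simp add: of_nat_max)
  show "real m \<ge> t * real k" using m c1 max.cobounded2[of 1 "real_of_int \<lceil>t * real k\<rceil>"] by linarith
  have "t * real k \<le> max 1 t * real k" using k by (intro mult_right_mono) auto
  moreover have "max 1 t * real k \<ge> 1 * 1" using k by (intro mult_mono) auto
  ultimately show "real m \<le> max 1 t * real k + 1" using m c2 by simp
  show "m \<ge> 1" unfolding m_def by simp
qed

lemma conv_ineq:
  fixes t :: real
  assumes k: "k \<ge> 1" and j: "j = k \<or> j = Suc k" and t: "t > 0"
  defines "m \<equiv> max 1 (nat \<lceil>t * real_of_int (2 * int k) / 2\<rceil>)"
  shows "min (1/(2*real j - 1)) (1/(2*real m - 1)) \<le> (3/t) / (2*real j - 1)"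
proof -
  note mb = m_bounds[OF k t, folded m_def]
  have kr: "real k \<ge> 1" using k by simp
  have jr: "real j \<ge> real k" "real j \<le> real k + 1" using j by auto
  have jp: "2*real j - 1 > 0" using jr kr by simp
  show ?thesis
  proof (cases "t \<le> 3")
    case True
    have "1 \<le> 3/t" using True t by simp
    then have "1 * (1/(2*real j - 1)) \<le> (3/t) * (1/(2*real j - 1))"
      using jp by (intro mult_right_mono) auto
    then show ?thesis by simp
  next
    case False
    have mp: "2 * real m - 1 \<ge> 2 * t * real k - 1" using mb(1) by simp
    have "t * (4 * real k - 1) \<ge> 3 * (4 * real k - 1)" using False kr by (intro mult_right_mono) auto
    then have key: "t * (2*real k + 1) \<le> 3 * (2*t*real k - 1)" using kr by (simp add: algebra_simps)
    have "t * (2*real j - 1) \<le> t * (2*real k + 1)" using jr t by (intro mult_left_mono) auto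
    also have "\<dots> \<le> 3 * (2*t*real k - 1)" by (rule key)
    also have "\<dots> \<le> 3 * (2*real m - 1)" using mp by simp
    finally have ineq: "t * (2*real j - 1) \<le> 3 * (2*real m - 1)" .
    have p2: "2*real m - 1 > 0" using mb(3) by simp
    have "1/(2*real m - 1) \<le> 3 / (t * (2*real j - 1))"
      using ineq p2 jp t by (simp add: divide_simps)
    then show ?thesis by simp
  qed
qed

lemma div_ineq:
  fixes t :: real
  assumes k: "k \<ge> 1" and j: "j = k \<or> j = Suc k" and t: "t > 0"
  defines "m \<equiv> max 1 (nat \<lceil>t * real_of_int (2 * int k) / 2\<rceil>)"
  shows "1/(2*real j - 1) - min (1/(2*real j - 1)) (1/(2*real m - 1)) \<le> (1 - 1/(3 * max 1 t)) / (2*real j - 1)"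
proof -
  note mb = m_bounds[OF k t, folded m_def]
  define T where "T = max 1 t"
  have T: "T \<ge> 1" unfolding T_def by simp
  have kr: "real k \<ge> 1" using k by simp
  have jr: "real j \<ge> real k" "real j \<le> real k + 1" using j by auto
  have jp: "2*real j - 1 > 0" using jr kr by simp
  have p2: "2*real m - 1 > 0" using mb(3) by simp
  have a: "(1/(3*T)) / (2*real j - 1) \<le> 1/(2*real j - 1)"
    using T jp by (simp add: divide_simps)
  have "T * (4 * real k - 3) \<ge> 1 * 1" using T kr by (intro mult_mono) auto
  then have h1: "T * 4 * real k - 3 * T \<ge> 1" by (simp add: algebra_simps)
  have h2: "T * real j \<ge> T * real k" using jr T by (intro mult_left_mono) auto
  have h3: "real m \<le> T * real k + 1" using mb(2) unfolding T_def by simp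
  have "2 * real m - 1 \<le> 6 * (T * real j) - 3 * T" using h1 h2 h3 by linarith
  then have "2 * real m - 1 \<le> 3 * T * (2 * real j - 1)" by (simp add: algebra_simps)
  then have b: "(1/(3*T)) / (2*real j - 1) \<le> 1/(2*real m - 1)"
    using T jp p2 by (simp add: divide_simps)
  have "(1/(3*T)) / (2*real j - 1) \<le> min (1/(2*real j - 1)) (1/(2*real m - 1))"
    using a b by simp
  moreover have "(1 - 1/(3*T)) / (2*real j - 1) = 1/(2*real j - 1) - (1/(3*T)) / (2*real j - 1)"
    by (simp add: diff_divide_distrib)
  ultimately show ?thesis unfolding T_def by linarith
qed


lemma T_pres:
  assumes y: "y \<in> {0<..<1} - \<rat>"
  shows "SE_T y \<in> {0<..<1} - \<rat>"
proof -
  have y': "0 < y" "y < 1" "y \<notin> \<rat>" using y by auto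
  obtain k where k: "k \<ge> 1" "y \<in> pc k" using piece_ex[OF y'] by blast
  note pp = piece2[OF k y'(3)]
  have pcy: "1/(2*real k+1) < y" "y < 1/(2*real k - 1)" using k(2) unfolding pc_def by auto
  have inI: "SE_T y \<in> Iv k \<or> SE_T y \<in> Iv (Suc k)"
  proof (cases "1/(2*real k) < y")
    case True
    then have "SE_T y = -1 + 2*real k*y" using pp by simp
    then show ?thesis using P1_iff[OF k(1)] True pcy by auto
  next
    case False
    then have lt: "y < 1/(2*real k)" using pp(2) by auto
    from False have "SE_T y = 1 + (-(2*real k))*y" using pp by simp
    then show ?thesis using P2_iff[OF k(1)] lt pcy by auto
  qed
  then have "SE_T y \<in> {0<..<1}" using Iv_sub01[of k] Iv_sub01[of "Suc k"] k(1) by auto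
  moreover have "SE_T y \<notin> \<rat>"
  proof
    assume q: "SE_T y \<in> \<rat>"
    have kr: "2 * real k \<noteq> 0" using k by simp
    have "y = (SE_T y + 1) / (2 * real k) \<or> y = (1 - SE_T y) / (2 * real k)"
      using pp(3) kr by (auto split: if_splits simp: field_simps)
    moreover have "(SE_T y + 1) / (2 * real k) \<in> \<rat>" "(1 - SE_T y) / (2 * real k) \<in> \<rat>"
      using q by (auto intro!: Rats_divide Rats_add Rats_diff Rats_mult simp del: of_nat_mult)
    ultimately show False using y'(3) by auto
  qed
  ultimately show ?thesis by simp
qed

lemma Tn_pres: "y \<in> {0<..<1} - \<rat> \<Longrightarrow> (SE_T ^^ n) y \<in> {0<..<1} - \<rat>"
proof (induction n)
  case 0 then show ?case by simp
next
  case (Suc n) then show ?case using T_pres[of "(SE_T ^^ n) y"] by (simp only: funpow.simps comp_apply)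
qed

lemma SE_d_shift: "SE_d (Suc i) ((SE_T ^^ r) x) = SE_d (Suc (i + r)) x"
  unfolding SE_d_def by (simp add: funpow_add)

lemma SE_d_T: "SE_d (Suc i) (SE_T x) = SE_d (Suc (Suc i)) x"
  using SE_d_shift[of i 1 x] by simp

lemma SE_d_1: "SE_d (Suc 0) x = SE_d1 x"
  unfolding SE_d_def by simp

lemma SE_d_pos:
  assumes "x \<in> {0<..<1} - \<rat>" "n \<ge> 1"
  shows "SE_d n x \<ge> 2"
proof -
  have z: "(SE_T ^^ (n-1)) x \<in> {0<..<1} - \<rat>" by (rule Tn_pres[OF assms(1)])
  then obtain k where "k \<ge> 1" "SE_d1 ((SE_T ^^ (n-1)) x) = 2 * int k"
    using d1_even[of "(SE_T ^^ (n-1)) x"] by auto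
  then show ?thesis unfolding SE_d_def by simp
qed


lemma emeasure_leb_Ioo_Q0: "0 \<le> u \<Longrightarrow> emeasure lebesgue ({0<..<(u::real)} - \<rat>) = ennreal u"
  using emeasure_leb_Ioo_Q[of 0 u] by simp

lemma Iv_1: "Iv 1 = {0<..<1}" unfolding Iv_def by simp

lemma Iv_meas: "j \<ge> 1 \<Longrightarrow> emeasure lebesgue (Iv j - \<rat>) = ennreal (1/(2*real j - 1))"
  unfolding Iv_def by (rule emeasure_leb_Ioo_Q0) simp

lemma thr_meas:
  fixes s :: real
  assumes j: "j \<ge> 1"
  defines "m \<equiv> max 1 (nat \<lceil>s/2\<rceil>)"
  shows "{y \<in> Iv j - \<rat>. real_of_int (SE_d1 y) \<ge> s} \<in> sets lebesgue"
    "emeasure lebesgue {y \<in> Iv j - \<rat>. real_of_int (SE_d1 y) \<ge> s} = ennreal (min (1/(2*real j - 1)) (1/(2*real m - 1)))"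
proof -
  have m1: "m \<ge> 1" unfolding m_def by simp
  note eq = thr_set[OF j, of s, folded m_def]
  show "{y \<in> Iv j - \<rat>. real_of_int (SE_d1 y) \<ge> s} \<in> sets lebesgue"
    unfolding eq by (intro sets.Diff Q_sets) simp
  have "0 \<le> min (1/(2*real j - 1)) (1/(2*real m - 1))" using j m1 by simp
  then show "emeasure lebesgue {y \<in> Iv j - \<rat>. real_of_int (SE_d1 y) \<ge> s} = ennreal (min (1/(2*real j - 1)) (1/(2*real m - 1)))"
    unfolding eq by (rule emeasure_leb_Ioo_Q0)
qed

primrec Ec :: "real \<Rightarrow> nat \<Rightarrow> int \<Rightarrow> real set" where
  "Ec t 0 p = {y \<in> {0<..<1} - \<rat>. t * real_of_int p \<le> real_of_int (SE_d1 y)}"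
| "Ec t (Suc n) p = {y \<in> {0<..<1} - \<rat>. SE_T y \<in> Ec t n (SE_d1 y)}"

lemma Ec_bound:
  assumes t: "t > 0"
  shows "\<forall>k\<ge>1. Ec t n (2 * int k) \<in> sets lebesgue \<and>
     (\<forall>j. (j = k \<or> j = Suc k) \<longrightarrow> emeasure lebesgue (Ec t n (2 * int k) \<inter> Iv j) \<le> ennreal ((3/t) / (2*real j - 1)))"
proof (induction n)
  case 0
  show ?case
  proof (intro allI impI conjI)
    fix k :: nat and j assume k: "k \<ge> 1"
    have eq: "Ec t 0 (2 * int k) \<inter> Iv j = {y \<in> Iv j - \<rat>. real_of_int (SE_d1 y) \<ge> t * real_of_int (2 * int k)}"
      if "j \<ge> 1" for j using Iv_sub01[OF that] unfolding Ec.simps by blast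
    have "Ec t 0 (2 * int k) = Ec t 0 (2 * int k) \<inter> Iv 1" unfolding Iv_1 Ec.simps by blast
    then show "Ec t 0 (2 * int k) \<in> sets lebesgue"
      using eq[of 1] thr_meas(1)[of 1 "t * real_of_int (2 * int k)"] by simp
    assume j: "j = k \<or> j = Suc k"
    then have j1: "j \<ge> 1" using k by auto
    show "emeasure lebesgue (Ec t 0 (2 * int k) \<inter> Iv j) \<le> ennreal ((3/t) / (2*real j - 1))"
      unfolding eq[OF j1] thr_meas(2)[OF j1]
      using conv_ineq[OF k j t] by (simp add: ennreal_leI)
  qed
next
  case (Suc n)
  show ?case
  proof (intro allI impI conjI)
    fix k :: nat and j assume k: "k \<ge> 1"
    have eq: "Ec t (Suc n) (2 * int k) \<inter> Iv j = {y \<in> Iv j - \<rat>. (\<lambda>_. True) (SE_d1 y) \<and> SE_T y \<in> Ec t n (SE_d1 y)}"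
      if "j \<ge> 1" for j using Iv_sub01[OF that] unfolding Ec.simps by blast
    have t3: "3/t \<ge> 0" using t by simp
    have hyp1: "\<And>k. k \<ge> 1 \<Longrightarrow> Ec t n (2 * int k) \<in> sets lebesgue"
      and hyp2: "\<And>k. k \<ge> 1 \<Longrightarrow> emeasure lebesgue (Ec t n (2*int k) \<inter> Iv k) \<le> ennreal ((3/t) / (2*real k - 1))"
      and hyp3: "\<And>k. k \<ge> 1 \<Longrightarrow> emeasure lebesgue (Ec t n (2*int k) \<inter> Iv (Suc k)) \<le> ennreal ((3/t) / (2*real k + 1))"
    proof -
      show "\<And>k. k \<ge> 1 \<Longrightarrow> Ec t n (2 * int k) \<in> sets lebesgue" using Suc.IH by blast
      show "\<And>k. k \<ge> 1 \<Longrightarrow> emeasure lebesgue (Ec t n (2*int k) \<inter> Iv k) \<le> ennreal ((3/t) / (2*real k - 1))"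
        using Suc.IH by blast
      fix k :: nat assume "k \<ge> 1"
      then have "emeasure lebesgue (Ec t n (2*int k) \<inter> Iv (Suc k)) \<le> ennreal ((3/t) / (2*real (Suc k) - 1))"
        using Suc.IH by blast
      then show "emeasure lebesgue (Ec t n (2*int k) \<inter> Iv (Suc k)) \<le> ennreal ((3/t) / (2*real k + 1))"
        by (simp add: algebra_simps)
    qed
    note G = GL[OF _ t3 hyp1 hyp2 hyp3, of _ "\<lambda>_. True"]
    have "Ec t (Suc n) (2 * int k) = Ec t (Suc n) (2 * int k) \<inter> Iv 1" unfolding Iv_1 Ec.simps by blast
    then show "Ec t (Suc n) (2 * int k) \<in> sets lebesgue"
      using eq[of 1] G(1)[of 1] by simp
    assume j: "j = k \<or> j = Suc k"
    then have j1: "j \<ge> 1" using k by auto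
    have "emeasure lebesgue (Ec t (Suc n) (2 * int k) \<inter> Iv j) \<le> ennreal (3/t) * emeasure lebesgue {y \<in> Iv j - \<rat>. True}"
      unfolding eq[OF j1] using G(3)[OF j1] by simp
    also have "\<dots> = ennreal (3/t) * ennreal (1/(2*real j - 1))"
    proof -
      have "{y \<in> Iv j - \<rat>. True} = Iv j - \<rat>" by blast
      then show ?thesis using Iv_meas[OF j1] by (simp only:)
    qed
    also have "\<dots> = ennreal ((3/t) / (2*real j - 1))"
      using t j1 by (simp add: ennreal_mult[symmetric])
    finally show "emeasure lebesgue (Ec t (Suc n) (2 * int k) \<inter> Iv j) \<le> ennreal ((3/t) / (2*real j - 1))" .
  qed
qed


lemma Ec_sub: "Ec t n p \<subseteq> {0<..<1} - \<rat>"
  by (cases n) auto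

lemma Ec_char:
  assumes "y \<in> {0<..<1} - \<rat>"
  shows "y \<in> Ec t n p \<longleftrightarrow> t * real_of_int (if n = 0 then p else SE_d n y) \<le> real_of_int (SE_d (Suc n) y)"
  using assms
proof (induction n arbitrary: y p)
  case 0
  then show ?case by (simp add: SE_d_1)
next
  case (Suc n)
  have Ty: "SE_T y \<in> {0<..<1} - \<rat>" using T_pres[OF Suc.prems] .
  have e1: "y \<in> Ec t (Suc n) p \<longleftrightarrow> SE_T y \<in> Ec t n (SE_d1 y)" using Suc.prems by simp
  have e2: "SE_T y \<in> Ec t n (SE_d1 y) \<longleftrightarrow> t * real_of_int (if n = 0 then SE_d1 y else SE_d n (SE_T y)) \<le> real_of_int (SE_d (Suc n) (SE_T y))"
    by (rule Suc.IH[OF Ty])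
  have e3: "(if n = 0 then SE_d1 y else SE_d n (SE_T y)) = SE_d (Suc n) y"
  proof (cases n)
    case 0 then show ?thesis by (simp add: SE_d_1)
  next
    case (Suc n') then show ?thesis by (simp add: SE_d_T)
  qed
  have e4: "SE_d (Suc n) (SE_T y) = SE_d (Suc (Suc n)) y" by (rule SE_d_T)
  have "y \<in> Ec t (Suc n) p \<longleftrightarrow> t * real_of_int (SE_d (Suc n) y) \<le> real_of_int (SE_d (Suc (Suc n)) y)"
    unfolding e1 e2 e3 e4 ..
  moreover have "(if Suc n = 0 then p else SE_d (Suc n) y) = SE_d (Suc n) y" by simp
  ultimately show ?case by (simp only:)
qed

lemma conv_R_bound:
  assumes t: "t > 0" and n: "n \<ge> 1"
  shows "{x \<in> {0<..<1} - \<rat>. t * real_of_int (SE_d n x) \<le> real_of_int (SE_d (Suc n) x)} \<in> sets lebesgue"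
    "emeasure lebesgue {x \<in> {0<..<1} - \<rat>. t * real_of_int (SE_d n x) \<le> real_of_int (SE_d (Suc n) x)} \<le> ennreal (3/t)"
proof -
  have eq: "{x \<in> {0<..<1} - \<rat>. t * real_of_int (SE_d n x) \<le> real_of_int (SE_d (Suc n) x)} = Ec t n 2"
  proof (intro set_eqI iffI)
    fix x assume "x \<in> {x \<in> {0<..<1} - \<rat>. t * real_of_int (SE_d n x) \<le> real_of_int (SE_d (Suc n) x)}"
    then show "x \<in> Ec t n 2" using Ec_char[of x t n 2] n by simp
  next
    fix x assume x: "x \<in> Ec t n 2"
    then have "x \<in> {0<..<1} - \<rat>" using Ec_sub by blast
    then show "x \<in> {x \<in> {0<..<1} - \<rat>. t * real_of_int (SE_d n x) \<le> real_of_int (SE_d (Suc n) x)}"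
      using Ec_char[of x t n 2] n x by simp
  qed
  have eq2: "Ec t n 2 = Ec t n (2 * int 1) \<inter> Iv 1" using Ec_sub[of t n 2] unfolding Iv_1 by simp blast
  have B: "\<forall>k\<ge>1. Ec t n (2 * int k) \<in> sets lebesgue \<and>
     (\<forall>j. (j = k \<or> j = Suc k) \<longrightarrow> emeasure lebesgue (Ec t n (2 * int k) \<inter> Iv j) \<le> ennreal ((3/t) / (2*real j - 1)))"
    by (rule Ec_bound[OF t])
  have EB: "Ec t n (2 * int 1) \<in> sets lebesgue" "emeasure lebesgue (Ec t n (2 * int 1) \<inter> Iv 1) \<le> ennreal ((3/t) / (2*real 1 - 1))"
    using spec[OF B, of 1] by auto
  show "{x \<in> {0<..<1} - \<rat>. t * real_of_int (SE_d n x) \<le> real_of_int (SE_d (Suc n) x)} \<in> sets lebesgue"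
    unfolding eq using EB(1) by simp
  show "emeasure lebesgue {x \<in> {0<..<1} - \<rat>. t * real_of_int (SE_d n x) \<le> real_of_int (SE_d (Suc n) x)} \<le> ennreal (3/t)"
    unfolding eq eq2 using EB(2) by simp
qed


definition Pr :: "(nat \<Rightarrow> real) \<Rightarrow> nat \<Rightarrow> nat \<Rightarrow> real" where
  "Pr \<phi> n L = (\<Prod>i<L. 1 - 1/(3 * max 1 (\<phi> (n + i + 1))))"

lemma fac_bounds: "0 \<le> 1 - 1/(3 * max 1 (x::real))" "1 - 1/(3 * max 1 x) \<le> 1"
proof -
  have "1/(3 * max 1 x) \<le> 1/3" by (simp add: divide_simps)
  moreover have "0 \<le> 1/(3 * max 1 x)" by simp
  ultimately show "0 \<le> 1 - 1/(3 * max 1 (x::real))" "1 - 1/(3 * max 1 x) \<le> 1" by linarith+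
qed

lemma Pr_nonneg: "0 \<le> Pr \<phi> n L"
  unfolding Pr_def by (intro prod_nonneg) (use fac_bounds in auto)

lemma Pr_0: "Pr \<phi> n 0 = 1" unfolding Pr_def by simp

lemma Pr_Suc: "Pr \<phi> n (Suc L) = (1 - 1/(3 * max 1 (\<phi> (Suc n)))) * Pr \<phi> (Suc n) L"
  unfolding Pr_def prod.lessThan_Suc_shift by simp

primrec Bd :: "(nat \<Rightarrow> real) \<Rightarrow> nat \<Rightarrow> nat \<Rightarrow> int \<Rightarrow> real set" where
  "Bd \<phi> 0 n p = {0<..<1} - \<rat>"
| "Bd \<phi> (Suc L) n p = {y \<in> {0<..<1} - \<rat>. real_of_int (SE_d1 y) < \<phi> (Suc n) * real_of_int p \<and> SE_T y \<in> Bd \<phi> L (Suc n) (SE_d1 y)}"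

lemma Bd_sub: "Bd \<phi> L n p \<subseteq> {0<..<1} - \<rat>"
  by (cases L) auto

lemma div_target:
  fixes t :: real
  assumes k: "k \<ge> 1" and j: "j = k \<or> j = Suc k" and t: "t > 0"
  shows "emeasure lebesgue {y \<in> Iv j - \<rat>. real_of_int (SE_d1 y) < t * real_of_int (2 * int k)}
     \<le> ennreal ((1 - 1/(3 * max 1 t)) / (2*real j - 1))"
proof -
  have j1: "j \<ge> 1" using j k by auto
  define m where "m = max 1 (nat \<lceil>t * real_of_int (2 * int k) / 2\<rceil>)"
  have m1: "m \<ge> 1" unfolding m_def by simp
  let ?G = "{y \<in> Iv j - \<rat>. real_of_int (SE_d1 y) \<ge> t * real_of_int (2 * int k)}"
  have eq: "{y \<in> Iv j - \<rat>. real_of_int (SE_d1 y) < t * real_of_int (2 * int k)} = (Iv j - \<rat>) - ?G"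
    by auto
  note TM = thr_meas[OF j1, of "t * real_of_int (2 * int k)", folded m_def]
  have Gm: "emeasure lebesgue ?G \<noteq> \<infinity>" unfolding TM(2) by simp
  have "emeasure lebesgue ((Iv j - \<rat>) - ?G) = emeasure lebesgue (Iv j - \<rat>) - emeasure lebesgue ?G"
    by (rule emeasure_Diff[OF Gm]) (use TM(1) in \<open>auto intro: sets.Diff Q_sets\<close>)
  also have "\<dots> = ennreal (1/(2*real j - 1)) - ennreal (min (1/(2*real j - 1)) (1/(2*real m - 1)))"
    unfolding TM(2) Iv_meas[OF j1] ..
  also have "\<dots> = ennreal (1/(2*real j - 1) - min (1/(2*real j - 1)) (1/(2*real m - 1)))"
    using j1 m1 by (intro ennreal_minus) simp
  also have "\<dots> \<le> ennreal ((1 - 1/(3 * max 1 t)) / (2*real j - 1))"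
    using div_ineq[OF k j t, folded m_def] by (rule ennreal_leI)
  finally show ?thesis unfolding eq .
qed

lemma Bd_bound:
  assumes pos: "\<And>m. m \<ge> 1 \<Longrightarrow> \<phi> m > 0"
  shows "\<forall>n k. k \<ge> 1 \<longrightarrow> Bd \<phi> L n (2 * int k) \<in> sets lebesgue \<and>
     (\<forall>j. (j = k \<or> j = Suc k) \<longrightarrow> emeasure lebesgue (Bd \<phi> L n (2 * int k) \<inter> Iv j) \<le> ennreal (Pr \<phi> n L / (2*real j - 1)))"
proof (induction L)
  case 0
  show ?case
  proof (intro allI impI conjI)
    fix n k :: nat and j assume k: "k \<ge> 1"
    show "Bd \<phi> 0 n (2 * int k) \<in> sets lebesgue" by (auto intro: sets.Diff Q_sets)
    assume j: "j = k \<or> j = Suc k"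
    then have j1: "j \<ge> 1" using k by auto
    have "Bd \<phi> 0 n (2 * int k) \<inter> Iv j = Iv j - \<rat>" using Iv_sub01[OF j1] by auto
    then show "emeasure lebesgue (Bd \<phi> 0 n (2 * int k) \<inter> Iv j) \<le> ennreal (Pr \<phi> n 0 / (2*real j - 1))"
      using Iv_meas[OF j1] by (simp add: Pr_0)
  qed
next
  case (Suc L)
  show ?case
  proof (intro allI impI conjI)
    fix n k :: nat and j assume k: "k \<ge> 1"
    define t where "t = \<phi> (Suc n)"
    have t: "t > 0" unfolding t_def by (rule pos) simp
    define C where "C = (\<lambda>q::int. real_of_int q < t * real_of_int (2 * int k))"
    have eq: "Bd \<phi> (Suc L) n (2 * int k) \<inter> Iv j = {y \<in> Iv j - \<rat>. C (SE_d1 y) \<and> SE_T y \<in> Bd \<phi> L (Suc n) (SE_d1 y)}"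
      if "j \<ge> 1" for j using Iv_sub01[OF that] unfolding Bd.simps C_def t_def by blast
    have \<rho>: "Pr \<phi> (Suc n) L \<ge> 0" by (rule Pr_nonneg)
    have hyp1: "\<And>k. k \<ge> 1 \<Longrightarrow> Bd \<phi> L (Suc n) (2 * int k) \<in> sets lebesgue"
      and hyp2: "\<And>k. k \<ge> 1 \<Longrightarrow> emeasure lebesgue (Bd \<phi> L (Suc n) (2*int k) \<inter> Iv k) \<le> ennreal (Pr \<phi> (Suc n) L / (2*real k - 1))"
      and hyp3: "\<And>k. k \<ge> 1 \<Longrightarrow> emeasure lebesgue (Bd \<phi> L (Suc n) (2*int k) \<inter> Iv (Suc k)) \<le> ennreal (Pr \<phi> (Suc n) L / (2*real k + 1))"
    proof -
      have IH: "Bd \<phi> L (Suc n) (2 * int k') \<in> sets lebesgue \<and>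
       (\<forall>j. (j = k' \<or> j = Suc k') \<longrightarrow> emeasure lebesgue (Bd \<phi> L (Suc n) (2 * int k') \<inter> Iv j) \<le> ennreal (Pr \<phi> (Suc n) L / (2*real j - 1)))"
        if "k' \<ge> 1" for k'
        by (rule mp[OF spec[OF spec[OF Suc.IH, of "Suc n"], of k'] that])
      show "\<And>k. k \<ge> 1 \<Longrightarrow> Bd \<phi> L (Suc n) (2 * int k) \<in> sets lebesgue" using IH by simp
      show "\<And>k. k \<ge> 1 \<Longrightarrow> emeasure lebesgue (Bd \<phi> L (Suc n) (2*int k) \<inter> Iv k) \<le> ennreal (Pr \<phi> (Suc n) L / (2*real k - 1))"
        using IH by simp
      fix k :: nat assume k1: "k \<ge> 1"
      have "emeasure lebesgue (Bd \<phi> L (Suc n) (2*int k) \<inter> Iv (Suc k)) \<le> ennreal (Pr \<phi> (Suc n) L / (2*real (Suc k) - 1))"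
        using IH[OF k1] by simp
      then show "emeasure lebesgue (Bd \<phi> L (Suc n) (2*int k) \<inter> Iv (Suc k)) \<le> ennreal (Pr \<phi> (Suc n) L / (2*real k + 1))"
        by (simp add: algebra_simps)
    qed
    note G = GL[OF _ \<rho> hyp1 hyp2 hyp3, of _ C]
    have "Bd \<phi> (Suc L) n (2 * int k) = Bd \<phi> (Suc L) n (2 * int k) \<inter> Iv 1"
      unfolding Iv_1 Bd.simps by blast
    then show "Bd \<phi> (Suc L) n (2 * int k) \<in> sets lebesgue"
      using eq[of 1] G(1)[of 1] by simp
    assume j: "j = k \<or> j = Suc k"
    then have j1: "j \<ge> 1" using k by auto
    have "emeasure lebesgue (Bd \<phi> (Suc L) n (2 * int k) \<inter> Iv j) \<le> ennreal (Pr \<phi> (Suc n) L) * emeasure lebesgue {y \<in> Iv j - \<rat>. C (SE_d1 y)}"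
      unfolding eq[OF j1] using G(3)[OF j1] by simp
    also have "\<dots> \<le> ennreal (Pr \<phi> (Suc n) L) * ennreal ((1 - 1/(3 * max 1 t)) / (2*real j - 1))"
      using div_target[OF k j t] unfolding C_def by (intro mult_left_mono) auto
    also have "\<dots> = ennreal (Pr \<phi> n (Suc L) / (2*real j - 1))"
    proof -
      have "0 \<le> (1 - 1/(3 * max 1 t)) / (2*real j - 1)" using fac_bounds(1)[of t] j1 by simp
      then have "ennreal (Pr \<phi> (Suc n) L) * ennreal ((1 - 1/(3 * max 1 t)) / (2*real j - 1))
          = ennreal (Pr \<phi> (Suc n) L * ((1 - 1/(3 * max 1 t)) / (2*real j - 1)))"
        by (rule ennreal_mult[symmetric, OF \<rho>])
      also have "Pr \<phi> (Suc n) L * ((1 - 1/(3 * max 1 t)) / (2*real j - 1)) = Pr \<phi> n (Suc L) / (2*real j - 1)"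
        unfolding Pr_Suc t_def by simp
      finally show ?thesis .
    qed
    finally show "emeasure lebesgue (Bd \<phi> (Suc L) n (2 * int k) \<inter> Iv j) \<le> ennreal (Pr \<phi> n (Suc L) / (2*real j - 1))" .
  qed
qed


primrec Wd :: "(nat \<Rightarrow> real) \<Rightarrow> nat \<Rightarrow> nat \<Rightarrow> nat \<Rightarrow> int \<Rightarrow> real set" where
  "Wd \<phi> 0 n L p = Bd \<phi> L n p"
| "Wd \<phi> (Suc r) n L p = {y \<in> {0<..<1} - \<rat>. SE_T y \<in> Wd \<phi> r n L (SE_d1 y)}"

lemma Wd_sub: "Wd \<phi> r n L p \<subseteq> {0<..<1} - \<rat>"
proof (cases r)
  case 0 then show ?thesis using Bd_sub[of \<phi> L n p] by simp
next
  case (Suc r') then show ?thesis by auto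
qed

lemma Wd_bound:
  assumes pos: "\<And>m. m \<ge> 1 \<Longrightarrow> \<phi> m > 0"
  shows "\<forall>k. k \<ge> 1 \<longrightarrow> Wd \<phi> r n L (2 * int k) \<in> sets lebesgue \<and>
     (\<forall>j. (j = k \<or> j = Suc k) \<longrightarrow> emeasure lebesgue (Wd \<phi> r n L (2 * int k) \<inter> Iv j) \<le> ennreal (Pr \<phi> n L / (2*real j - 1)))"
proof (induction r)
  case 0
  show ?case using spec[OF Bd_bound[OF pos, where L=L], where x=n] by simp
next
  case (Suc r)
  show ?case
  proof (intro allI impI conjI)
    fix k :: nat and j assume k: "k \<ge> 1"
    have eq: "Wd \<phi> (Suc r) n L (2 * int k) \<inter> Iv j = {y \<in> Iv j - \<rat>. (\<lambda>_. True) (SE_d1 y) \<and> SE_T y \<in> Wd \<phi> r n L (SE_d1 y)}"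
      if "j \<ge> 1" for j using Iv_sub01[OF that] unfolding Wd.simps by blast
    have \<rho>: "Pr \<phi> n L \<ge> 0" by (rule Pr_nonneg)
    have hyp1: "\<And>k. k \<ge> 1 \<Longrightarrow> Wd \<phi> r n L (2 * int k) \<in> sets lebesgue"
      and hyp2: "\<And>k. k \<ge> 1 \<Longrightarrow> emeasure lebesgue (Wd \<phi> r n L (2*int k) \<inter> Iv k) \<le> ennreal (Pr \<phi> n L / (2*real k - 1))"
      and hyp3: "\<And>k. k \<ge> 1 \<Longrightarrow> emeasure lebesgue (Wd \<phi> r n L (2*int k) \<inter> Iv (Suc k)) \<le> ennreal (Pr \<phi> n L / (2*real k + 1))"
    proof -
      have IH: "Wd \<phi> r n L (2 * int k') \<in> sets lebesgue \<and>
       (\<forall>j. (j = k' \<or> j = Suc k') \<longrightarrow> emeasure lebesgue (Wd \<phi> r n L (2 * int k') \<inter> Iv j) \<le> ennreal (Pr \<phi> n L / (2*real j - 1)))"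
        if "k' \<ge> 1" for k'
        by (rule mp[OF spec[OF Suc.IH, of k'] that])
      show "\<And>k. k \<ge> 1 \<Longrightarrow> Wd \<phi> r n L (2 * int k) \<in> sets lebesgue" using IH by simp
      show "\<And>k. k \<ge> 1 \<Longrightarrow> emeasure lebesgue (Wd \<phi> r n L (2*int k) \<inter> Iv k) \<le> ennreal (Pr \<phi> n L / (2*real k - 1))"
        using IH by simp
      fix k :: nat assume k1: "k \<ge> 1"
      have "emeasure lebesgue (Wd \<phi> r n L (2*int k) \<inter> Iv (Suc k)) \<le> ennreal (Pr \<phi> n L / (2*real (Suc k) - 1))"
        using IH[OF k1] by simp
      then show "emeasure lebesgue (Wd \<phi> r n L (2*int k) \<inter> Iv (Suc k)) \<le> ennreal (Pr \<phi> n L / (2*real k + 1))"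
        by (simp add: algebra_simps)
    qed
    note G = GL[OF _ \<rho> hyp1 hyp2 hyp3, of _ "\<lambda>_. True"]
    have "Wd \<phi> (Suc r) n L (2 * int k) = Wd \<phi> (Suc r) n L (2 * int k) \<inter> Iv 1"
      unfolding Iv_1 Wd.simps by blast
    then show "Wd \<phi> (Suc r) n L (2 * int k) \<in> sets lebesgue"
      using eq[of 1] G(1)[of 1] by simp
    assume j: "j = k \<or> j = Suc k"
    then have j1: "j \<ge> 1" using k by auto
    have "emeasure lebesgue (Wd \<phi> (Suc r) n L (2 * int k) \<inter> Iv j) \<le> ennreal (Pr \<phi> n L) * emeasure lebesgue {y \<in> Iv j - \<rat>. True}"
      unfolding eq[OF j1] using G(3)[OF j1] by simp
    also have "\<dots> = ennreal (Pr \<phi> n L) * ennreal (1/(2*real j - 1))"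
    proof -
      have "{y \<in> Iv j - \<rat>. True} = Iv j - \<rat>" by blast
      then show ?thesis using Iv_meas[OF j1] by (simp only:)
    qed
    also have "\<dots> = ennreal (Pr \<phi> n L / (2*real j - 1))"
      using \<rho> j1 by (simp add: ennreal_mult[symmetric])
    finally show "emeasure lebesgue (Wd \<phi> (Suc r) n L (2 * int k) \<inter> Iv j) \<le> ennreal (Pr \<phi> n L / (2*real j - 1))" .
  qed
qed

lemma Bd_char:
  assumes "y \<in> {0<..<1} - \<rat>"
  shows "y \<in> Bd \<phi> L n p \<longleftrightarrow>
    (\<forall>i<L. real_of_int (SE_d (Suc i) y) < \<phi> (n + i + 1) * real_of_int (if i = 0 then p else SE_d i y))"
  using assms
proof (induction L arbitrary: y n p)
  case 0
  then show ?case by simp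
next
  case (Suc L)
  have Ty: "SE_T y \<in> {0<..<1} - \<rat>" using T_pres[OF Suc.prems] .
  have e1: "y \<in> Bd \<phi> (Suc L) n p \<longleftrightarrow> real_of_int (SE_d1 y) < \<phi> (Suc n) * real_of_int p \<and> SE_T y \<in> Bd \<phi> L (Suc n) (SE_d1 y)"
    using Suc.prems by simp
  have e2: "SE_T y \<in> Bd \<phi> L (Suc n) (SE_d1 y) \<longleftrightarrow>
     (\<forall>i<L. real_of_int (SE_d (Suc i) (SE_T y)) < \<phi> (Suc n + i + 1) * real_of_int (if i = 0 then SE_d1 y else SE_d i (SE_T y)))"
    by (rule Suc.IH[OF Ty])
  have e3: "(if i = 0 then SE_d1 y else SE_d i (SE_T y)) = SE_d (Suc i) y" for i
  proof (cases i)
    case 0 then show ?thesis by (simp add: SE_d_1)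
  next
    case (Suc i') then show ?thesis by (simp add: SE_d_T)
  qed
  have e4: "SE_d (Suc i) (SE_T y) = SE_d (Suc (Suc i)) y" for i by (rule SE_d_T)
  have "(\<forall>i<Suc L. real_of_int (SE_d (Suc i) y) < \<phi> (n + i + 1) * real_of_int (if i = 0 then p else SE_d i y))
     \<longleftrightarrow> real_of_int (SE_d (Suc 0) y) < \<phi> (n + 0 + 1) * real_of_int p \<and>
        (\<forall>i<L. real_of_int (SE_d (Suc (Suc i)) y) < \<phi> (n + Suc i + 1) * real_of_int (SE_d (Suc i) y))"
    (is "?A \<longleftrightarrow> ?B")
  proof
    assume A: ?A
    show ?B
    proof
      show "real_of_int (SE_d (Suc 0) y) < \<phi> (n + 0 + 1) * real_of_int p" using A[rule_format, of 0] by simp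
      show "\<forall>i<L. real_of_int (SE_d (Suc (Suc i)) y) < \<phi> (n + Suc i + 1) * real_of_int (SE_d (Suc i) y)"
        using A by auto
    qed
  next
    assume B: ?B
    show ?A
    proof (intro allI impI)
      fix i assume i: "i < Suc L"
      show "real_of_int (SE_d (Suc i) y) < \<phi> (n + i + 1) * real_of_int (if i = 0 then p else SE_d i y)"
      proof (cases i)
        case 0 then show ?thesis using B by simp
      next
        case (Suc i') then show ?thesis using B i by auto
      qed
    qed
  qed
  moreover have "SE_d (Suc 0) y = SE_d1 y" by (rule SE_d_1)
  moreover have "\<And>i. \<phi> (Suc n + i + 1) = \<phi> (n + Suc i + 1)" by simp
  ultimately show ?case unfolding e1 e2 e3 e4 by simp
qed

lemma Wd_char:
  assumes "y \<in> {0<..<1} - \<rat>"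
  shows "y \<in> Wd \<phi> (Suc r) n L p \<longleftrightarrow> (SE_T ^^ (Suc r)) y \<in> Bd \<phi> L n (SE_d (Suc r) y)"
  using assms
proof (induction r arbitrary: y p)
  case 0
  then show ?case by (simp add: SE_d_1)
next
  case (Suc r)
  have Ty: "SE_T y \<in> {0<..<1} - \<rat>" using T_pres[OF Suc.prems] .
  have "y \<in> Wd \<phi> (Suc (Suc r)) n L p \<longleftrightarrow> SE_T y \<in> Wd \<phi> (Suc r) n L (SE_d1 y)"
    using Suc.prems by simp
  also have "\<dots> \<longleftrightarrow> (SE_T ^^ (Suc r)) (SE_T y) \<in> Bd \<phi> L n (SE_d (Suc r) (SE_T y))"
    by (rule Suc.IH[OF Ty])
  also have "(SE_T ^^ (Suc r)) (SE_T y) = (SE_T ^^ (Suc (Suc r))) y"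
    by (simp only: funpow_Suc_right comp_apply)
  also have "SE_d (Suc r) (SE_T y) = SE_d (Suc (Suc r)) y" by (rule SE_d_T)
  finally show ?case .
qed


lemma R_lt_iff:
  assumes x: "x \<in> {0<..<1} - \<rat>" and m: "m \<ge> 2"
  shows "SE_R m x < t \<longleftrightarrow> real_of_int (SE_d m x) < t * real_of_int (SE_d (m-1) x)"
proof -
  have "m - 1 \<ge> 1" using m by simp
  then have "SE_d (m-1) x \<ge> 2" by (rule SE_d_pos[OF x])
  then have p: "real_of_int (SE_d (m-1) x) > 0" by simp
  have "SE_R m x = real_of_int (SE_d m x) / real_of_int (SE_d (m-1) x)" unfolding SE_R_def using m by simp
  then show ?thesis using p by (simp add: divide_less_eq)
qed

lemma M_ge_R: "1 \<le> k \<Longrightarrow> k \<le> n \<Longrightarrow> SE_R k x \<le> SE_M n x"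
  unfolding SE_M_def by (intro Max_ge) auto

lemma M_witness:
  assumes "n \<ge> 1" "SE_M n x \<ge> c"
  shows "\<exists>k. 1 \<le> k \<and> k \<le> n \<and> SE_R k x \<ge> c"
proof -
  have "SE_M n x \<in> (\<lambda>k. SE_R k x) ` {1..n}" unfolding SE_M_def using assms(1) by (intro Max_in) auto
  then show ?thesis using assms(2) by auto
qed

lemma G_char:
  assumes x: "x \<in> {0<..<1} - \<rat>" and r: "r \<ge> 1"
  shows "x \<in> Wd \<phi> r r L 2 \<longleftrightarrow>
    (\<forall>i<L. real_of_int (SE_d (r+i+1) x) < \<phi> (r+i+1) * real_of_int (SE_d (r+i) x))"
proof -
  obtain r' where r': "r = Suc r'" using r by (cases r) auto
  define z where "z = (SE_T ^^ r) x"
  have z: "z \<in> {0<..<1} - \<rat>" unfolding z_def by (rule Tn_pres[OF x])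
  have "x \<in> Wd \<phi> r r L 2 \<longleftrightarrow> z \<in> Bd \<phi> L r (SE_d r x)"
    unfolding z_def r' by (rule Wd_char[OF x])
  also have "\<dots> \<longleftrightarrow> (\<forall>i<L. real_of_int (SE_d (Suc i) z) < \<phi> (r + i + 1) * real_of_int (if i = 0 then SE_d r x else SE_d i z))"
    by (rule Bd_char[OF z])
  also have "\<dots> \<longleftrightarrow> (\<forall>i<L. real_of_int (SE_d (r+i+1) x) < \<phi> (r+i+1) * real_of_int (SE_d (r+i) x))"
  proof -
    have a: "SE_d (Suc i) z = SE_d (r+i+1) x" for i
      unfolding z_def SE_d_shift by (simp add: algebra_simps)
    have b: "(if i = 0 then SE_d r x else SE_d i z) = SE_d (r+i) x" for i
    proof (cases i)
      case 0 then show ?thesis by simp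
    next
      case (Suc i') then show ?thesis unfolding z_def using SE_d_shift[of i' r x] by (simp add: algebra_simps)
    qed
    show ?thesis unfolding a b ..
  qed
  finally show ?thesis .
qed

lemma G_meas:
  assumes pos: "\<And>m. m \<ge> 1 \<Longrightarrow> \<phi> m > 0"
  shows "Wd \<phi> r r L 2 \<in> sets lebesgue" "emeasure lebesgue (Wd \<phi> r r L 2) \<le> ennreal (Pr \<phi> r L)"
proof -
  have B: "\<forall>k. k \<ge> 1 \<longrightarrow> Wd \<phi> r r L (2 * int k) \<in> sets lebesgue \<and>
     (\<forall>j. (j = k \<or> j = Suc k) \<longrightarrow> emeasure lebesgue (Wd \<phi> r r L (2 * int k) \<inter> Iv j) \<le> ennreal (Pr \<phi> r L / (2*real j - 1)))"
    by (rule Wd_bound[OF pos])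
  have EB: "Wd \<phi> r r L (2 * int 1) \<in> sets lebesgue" "emeasure lebesgue (Wd \<phi> r r L (2 * int 1) \<inter> Iv 1) \<le> ennreal (Pr \<phi> r L / (2*real 1 - 1))"
    using spec[OF B, where x=1] by auto
  have eq2: "Wd \<phi> r r L (2 * int 1) \<inter> Iv 1 = Wd \<phi> r r L 2" using Wd_sub[of \<phi> r r L 2] unfolding Iv_1 by simp blast
  show "Wd \<phi> r r L 2 \<in> sets lebesgue" using EB(1) by simp
  show "emeasure lebesgue (Wd \<phi> r r L 2) \<le> ennreal (Pr \<phi> r L)" using EB(2) unfolding eq2 by simp
qed

lemma Pr_small:
  assumes pos: "\<And>m. m \<ge> 1 \<Longrightarrow> \<phi> m > 0" and ns: "\<not> summable (\<lambda>n. 1 / \<phi> (n + 1))"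
    and e: "e > 0"
  shows "\<exists>L. Pr \<phi> r L < e"
proof (rule ccontr)
  assume "\<not> (\<exists>L. Pr \<phi> r L < e)"
  then have ge: "Pr \<phi> r L \<ge> e" for L by (simp add: not_less)
  define a where "a i = 1/(3 * max 1 (\<phi> (r + i + 1)))" for i
  have a0: "a i \<ge> 0" for i unfolding a_def by simp
  have "Pr \<phi> r L \<le> exp (- (\<Sum>i<L. a i))" for L
  proof -
    have "Pr \<phi> r L = (\<Prod>i<L. 1 - a i)" unfolding Pr_def a_def ..
    also have "\<dots> \<le> (\<Prod>i<L. exp (- a i))"
    proof (rule prod_mono)
      fix i assume "i \<in> {..<L}"
      have "0 \<le> 1 - a i" unfolding a_def by (rule fac_bounds(1))
      moreover have "1 - a i \<le> exp (- a i)" using exp_ge_add_one_self[of "- a i"] by simp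
      ultimately show "0 \<le> 1 - a i \<and> 1 - a i \<le> exp (- a i)" by simp
    qed
    also have "\<dots> = exp (- (\<Sum>i<L. a i))" unfolding sum_negf[symmetric] by (rule exp_sum[symmetric]) simp
    finally show ?thesis .
  qed
  then have "e \<le> exp (- (\<Sum>i<L. a i))" for L using ge order.trans by blast
  then have "ln e \<le> ln (exp (- (\<Sum>i<L. a i)))" for L using e by (subst ln_le_cancel_iff) auto
  then have lnb: "ln e \<le> - (\<Sum>i<L. a i)" for L by (simp only: ln_exp)
  have "(\<Sum>i<L. a i) \<le> - ln e" for L using lnb[of L] by linarith
  then have sa: "summable a" by (intro summableI_nonneg_bounded[OF a0])
  then have "a \<longlonglongrightarrow> 0" by (rule summable_LIMSEQ_zero)
  then have "eventually (\<lambda>i. a i < 1/3) sequentially" by (rule order_tendstoD) simp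
  then have ev: "eventually (\<lambda>i. 3 * a i = 1 / \<phi> (r + i + 1)) sequentially"
  proof (rule eventually_mono)
    fix i assume "a i < 1/3"
    then have "\<not> max 1 (\<phi> (r + i + 1)) \<le> 1" unfolding a_def by (auto simp: divide_simps)
    then have "max 1 (\<phi> (r + i + 1)) = \<phi> (r + i + 1)" by simp
    then show "3 * a i = 1 / \<phi> (r + i + 1)" unfolding a_def by simp
  qed
  have "summable (\<lambda>i. 3 * a i)" using sa by (rule summable_mult)
  then have "summable (\<lambda>i. 1 / \<phi> (r + i + 1))" using summable_cong[OF ev] by simp
  then have "summable (\<lambda>i. 1 / \<phi> ((i + r) + 1))" by (simp add: algebra_simps)
  then have "summable (\<lambda>n. 1 / \<phi> (n + 1))" by (rule summable_iff_shift[THEN iffD1])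
  with ns show False by contradiction
qed


lemma conv_case:
  fixes \<phi> :: "nat \<Rightarrow> real"
  assumes pos: "\<And>n. n \<ge> 1 \<Longrightarrow> \<phi> n > 0"
    and mono: "\<And>m n. 1 \<le> m \<Longrightarrow> m \<le> n \<Longrightarrow> \<phi> m \<le> \<phi> n"
    and s: "summable (\<lambda>n. 1 / \<phi> (n + 1))"
  shows "M_set \<phi> \<in> null_sets lebesgue"
proof -
  define A where "A n = {x \<in> {0<..<1} - \<rat>. \<phi> (n+2) * real_of_int (SE_d (Suc n) x) \<le> real_of_int (SE_d (Suc (Suc n)) x)}" for n
  have tp: "\<phi> (n+2) > 0" for n by (rule pos) simp
  have Am: "A n \<in> sets lebesgue" for n
    unfolding A_def by (rule conv_R_bound(1)[OF tp]) simp
  have Ab: "emeasure lebesgue (A n) \<le> ennreal (3 / \<phi> (n+2))" for n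
    unfolding A_def by (rule conv_R_bound(2)[OF tp]) simp
  have Afin: "emeasure lebesgue (A n) < \<infinity>" for n
    using Ab[of n] by (simp add: le_less_trans)
  have Ameas: "measure lebesgue (A n) \<le> 3 / \<phi> (n+2)" for n
  proof -
    have "ennreal (measure lebesgue (A n)) \<le> ennreal (3 / \<phi> (n+2))"
      using Ab[of n] emeasure_eq_ennreal_measure[of lebesgue "A n"] Afin[of n] by simp
    then show ?thesis using tp[of n] by (simp add: ennreal_le_iff)
  qed
  have "summable (\<lambda>n. 1 / \<phi> ((n + 1) + 1))" using s by (rule summable_iff_shift[THEN iffD2])
  then have "summable (\<lambda>n. 3 * (1 / \<phi> (n + 2)))" by (intro summable_mult) (simp add: algebra_simps)
  then have s3: "summable (\<lambda>n. 3 / \<phi> (n + 2))" by simp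
  have sA: "summable (\<lambda>n. measure lebesgue (A n))"
    by (rule summable_comparison_test[OF _ s3]) (use Ameas in auto)
  have null: "limsup A \<in> null_sets lebesgue"
    by (rule borel_cantelli_limsup1[OF Am Afin sA])
  have phi_big: "\<exists>N2. \<forall>n\<ge>N2. \<phi> (n+1) > B" for B
  proof -
    have "(\<lambda>n. 1 / \<phi> (n + 1)) \<longlonglongrightarrow> 0" by (rule summable_LIMSEQ_zero[OF s])
    moreover have "1 / (\<bar>B\<bar> + 1) > 0" by simp
    ultimately have "eventually (\<lambda>n. 1 / \<phi> (n + 1) < 1 / (\<bar>B\<bar> + 1)) sequentially"
      by (rule order_tendstoD)
    then obtain N2 where N2: "\<And>n. n \<ge> N2 \<Longrightarrow> 1 / \<phi> (n + 1) < 1 / (\<bar>B\<bar> + 1)"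
      by (auto simp: eventually_sequentially)
    have "\<phi> (n+1) > B" if "n \<ge> N2" for n
    proof (rule ccontr)
      assume "\<not> \<phi> (n+1) > B"
      then have le: "\<phi> (n+1) \<le> \<bar>B\<bar> + 1" by simp
      have "1 / (\<bar>B\<bar> + 1) \<le> 1 / \<phi> (n + 1)" using le pos[of "n+1"] by (intro divide_left_mono) auto
      with N2[OF that] show False by simp
    qed
    then show ?thesis by blast
  qed
  have "M_set \<phi> \<subseteq> limsup A"
  proof
    fix x assume xM: "x \<in> M_set \<phi>"
    then have x: "x \<in> {0<..<1} - \<rat>" and inf: "infinite {n. n \<ge> 1 \<and> SE_M n x \<ge> \<phi> n}"
      unfolding M_set_def by auto
    show "x \<in> limsup A"
    proof (rule ccontr)
      assume "x \<notin> limsup A"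
      then have "x \<notin> (\<Inter>n. \<Union>m\<in>{n..}. A m)" unfolding limsup_INF_SUP by simp
      then obtain N where "x \<notin> (\<Union>m\<in>{N..}. A m)" by blast
      then have N: "\<And>m. m \<ge> N \<Longrightarrow> x \<notin> A m" by blast
      have Rlt: "SE_R k x < \<phi> k" if "k \<ge> N + 2" for k
      proof -
        define m where "m = k - 2"
        have m: "k = m + 2" "m \<ge> N" using that unfolding m_def by auto
        have "x \<notin> A m" using N[OF m(2)] .
        then have "real_of_int (SE_d (Suc (Suc m)) x) < \<phi> (m+2) * real_of_int (SE_d (Suc m) x)"
          using x unfolding A_def by auto
        moreover have "k - 1 = Suc m" "k = Suc (Suc m)" using m by auto
        ultimately show ?thesis using R_lt_iff[OF x, of k "\<phi> k"] m by simp
      qed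
      define B0 where "B0 = Max ((\<lambda>k. SE_R k x) ` {1..N+1})"
      have B0: "SE_R k x \<le> B0" if "1 \<le> k" "k \<le> N+1" for k
        unfolding B0_def using that by (intro Max_ge) auto
      obtain N2 where N2: "\<And>n. n \<ge> N2 \<Longrightarrow> \<phi> (n+1) > B0" using phi_big by blast
      have "{n. n \<ge> 1 \<and> SE_M n x \<ge> \<phi> n} \<subseteq> {..< N + N2 + 2}"
      proof
        fix n assume n: "n \<in> {n. n \<ge> 1 \<and> SE_M n x \<ge> \<phi> n}"
        show "n \<in> {..< N + N2 + 2}"
        proof (rule ccontr)
          assume "n \<notin> {..< N + N2 + 2}"
          then have nb: "n \<ge> N + N2 + 2" by simp
          obtain k where k: "1 \<le> k" "k \<le> n" "SE_R k x \<ge> \<phi> n" using M_witness[where n=n and x=x and c="\<phi> n"] n by auto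
          show False
          proof (cases "k \<ge> N + 2")
            case True
            then have "SE_R k x < \<phi> k" by (rule Rlt)
            moreover have "\<phi> k \<le> \<phi> n" using mono[OF k(1) k(2)] .
            ultimately show False using k(3) by simp
          next
            case False
            then have "SE_R k x \<le> B0" using B0 k(1) by simp
            moreover have "\<phi> ((n - 1) + 1) > B0" using nb by (intro N2) simp
            moreover have "(n - 1) + 1 = n" using nb by simp
            ultimately show False using k(3) by simp
          qed
        qed
      qed
      then have "finite {n. n \<ge> 1 \<and> SE_M n x \<ge> \<phi> n}" by (rule finite_subset) simp
      with inf show False by contradiction
    qed
  qed
  then show ?thesis using null by (rule null_sets_completion_subset)
qed

lemma div_case:
  fixes \<phi> :: "nat \<Rightarrow> real"
  assumes pos: "\<And>n. n \<ge> 1 \<Longrightarrow> \<phi> n > 0"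
    and ns: "\<not> summable (\<lambda>n. 1 / \<phi> (n + 1))"
  shows "({0<..<1} - \<rat>) - M_set \<phi> \<in> null_sets lebesgue"
proof -
  define Nr where "Nr r = (\<Inter>L. Wd \<phi> (Suc r) (Suc r) L 2)" for r
  have Nr_null: "Nr r \<in> null_sets lebesgue" for r
  proof -
    have Wm: "Wd \<phi> (Suc r) (Suc r) L 2 \<in> sets lebesgue" for L by (rule G_meas(1)[OF pos])
    have m: "Nr r \<in> sets lebesgue" unfolding Nr_def
      by (rule sets.countable_INT) (use Wm in blast)+
    have le: "emeasure lebesgue (Nr r) \<le> ennreal (Pr \<phi> (Suc r) L)" for L
    proof -
      have "emeasure lebesgue (Nr r) \<le> emeasure lebesgue (Wd \<phi> (Suc r) (Suc r) L 2)"
        by (rule emeasure_mono[OF _ Wm]) (unfold Nr_def, blast)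
      also have "\<dots> \<le> ennreal (Pr \<phi> (Suc r) L)" by (rule G_meas(2)[OF pos])
      finally show ?thesis .
    qed
    have "emeasure lebesgue (Nr r) \<le> 0"
    proof (rule ennreal_le_epsilon)
      fix e :: real assume e: "0 < e"
      obtain L where "Pr \<phi> (Suc r) L < e" using Pr_small[OF pos ns e] by blast
      then have "ennreal (Pr \<phi> (Suc r) L) \<le> ennreal e" by (intro ennreal_leI) simp
      then show "emeasure lebesgue (Nr r) \<le> 0 + ennreal e" using le[of L] by simp
    qed
    then show ?thesis using m by auto
  qed
  have "({0<..<1} - \<rat>) - M_set \<phi> \<subseteq> (\<Union>r. Nr r)"
  proof
    fix x assume xx: "x \<in> ({0<..<1} - \<rat>) - M_set \<phi>"
    then have x: "x \<in> {0<..<1} - \<rat>" by blast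
    have "finite {n. n \<ge> 1 \<and> SE_M n x \<ge> \<phi> n}" using xx unfolding M_set_def by blast
    then obtain m where m: "\<And>n. n \<in> {n. n \<ge> 1 \<and> SE_M n x \<ge> \<phi> n} \<Longrightarrow> n < m"
      unfolding finite_nat_set_iff_bounded by blast
    have r1: "1 \<le> Suc m" by simp
    have "x \<in> Wd \<phi> (Suc m) (Suc m) L 2" for L
      unfolding G_char[OF x r1]
    proof (intro allI impI)
      fix i assume "i < L"
      define n where "n = Suc m + i + 1"
      have n1: "n \<ge> 1" "n \<ge> 2" unfolding n_def by auto
      have "\<not> n < m" unfolding n_def by simp
      then have "\<not> SE_M n x \<ge> \<phi> n" using m[of n] n1 by blast
      then have "SE_R n x < \<phi> n" using M_ge_R[of n n x] n1 by simp
      then have "real_of_int (SE_d n x) < \<phi> n * real_of_int (SE_d (n - 1) x)"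
        using R_lt_iff[OF x n1(2)] by simp
      moreover have "n - 1 = Suc m + i" unfolding n_def by simp
      ultimately show "real_of_int (SE_d (Suc m + i + 1) x) < \<phi> (Suc m + i + 1) * real_of_int (SE_d (Suc m + i) x)"
        unfolding n_def by simp
    qed
    then have "x \<in> Nr m" unfolding Nr_def by blast
    then show "x \<in> (\<Union>r. Nr r)" by blast
  qed
  moreover have "(\<Union>r. Nr r) \<in> null_sets lebesgue" using Nr_null by blast
  ultimately show ?thesis by (rule null_sets_completion_subset)
qed

theorem corollary1p5:
  fixes \<phi> :: "nat \<Rightarrow> real"
  assumes pos: "\<And>n. n \<ge> 1 \<Longrightarrow> \<phi> n > 0"
    and mono: "\<And>m n. 1 \<le> m \<Longrightarrow> m \<le> n \<Longrightarrow> \<phi> m \<le> \<phi> n"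
  shows "(\<not> summable (\<lambda>n. 1 / \<phi> (n + 1)) \<longrightarrow>
            M_set \<phi> \<in> sets lebesgue \<and> emeasure lebesgue (M_set \<phi>) = 1)
       \<and> (summable (\<lambda>n. 1 / \<phi> (n + 1)) \<longrightarrow>
            M_set \<phi> \<in> sets lebesgue \<and> emeasure lebesgue (M_set \<phi>) = 0)"
proof (intro conjI impI)
  assume ns: "\<not> summable (\<lambda>n. 1 / \<phi> (n + 1))"
  have Z: "({0<..<1} - \<rat>) - M_set \<phi> \<in> null_sets lebesgue" by (rule div_case[OF pos ns])
  have "{0<..<1::real} \<in> sets lebesgue" using Iv_sets[of 1] unfolding Iv_1 .
  then have I: "{0<..<1::real} - \<rat> \<in> sets lebesgue" using Q_sets by (rule sets.Diff)
  have sub: "M_set \<phi> \<subseteq> {0<..<1} - \<rat>" unfolding M_set_def by blast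
  have eq: "M_set \<phi> = ({0<..<1} - \<rat>) - (({0<..<1} - \<rat>) - M_set \<phi>)" using sub by blast
  show "M_set \<phi> \<in> sets lebesgue" by (subst eq) (use I Z in auto)
  have D: "emeasure lebesgue (({0<..<1} - \<rat>) - (({0<..<1} - \<rat>) - M_set \<phi>)) = emeasure lebesgue ({0<..<1::real} - \<rat>)"
    using emeasure_Diff_null_set[OF Z I] .
  have "emeasure lebesgue (M_set \<phi>) = emeasure lebesgue ({0<..<1::real} - \<rat>)"
    using D unfolding eq[symmetric] .
  also have "\<dots> = 1" using emeasure_leb_Ioo_Q0[of 1] by simp
  finally show "emeasure lebesgue (M_set \<phi>) = 1" .
next
  assume s: "summable (\<lambda>n. 1 / \<phi> (n + 1))"
  have Z: "M_set \<phi> \<in> null_sets lebesgue" by (rule conv_case[OF pos mono s])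
  then show "M_set \<phi> \<in> sets lebesgue" by auto
  show "emeasure lebesgue (M_set \<phi>) = 0" using Z by auto
qed

end
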